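(* The map $\nabla:M_X\to M_X$ is a homomorphism of $\mathfrak g$-modules with $\nabla^2=0$, mapping $M_X^{m,n}$ to $M_X^{m-1,n-1}$; moreover its restrictions $M_A^{m,n}\to M_A^{m-1,n-1}$ ($m,n\ge1$), $M_B^{-m,n}\to M_B^{-m-1,n-1}$ ($m\ge0,n\ge1$), $M_C^{-m,-n}\to M_C^{-m-1,-n-1}$ ($m,n\ge0$), $M_D^{m,-n}\to M_D^{m-1,-n-1}$ ($m\ge1,n\ge0$) are nonzero.
   Context: Let $\Lambda(4)$ be the Grassmann superalgebra on odd generators $\xi_1,\dots,\xi_4$; $\xi_I=\xi_{i_1}\cdots\xi_{i_r}$, $\xi_{ij}=\xi_i\xi_j$. Let $K(1,4)_+=\mathbb C[t]\otimes\Lambda(4)$ with bracket $[f,g]=(2f-\sum_i\xi_i\partial_{\xi_i}f)\partial_tg-\partial_tf\,(2g-\sum_i\xi_i\partial_{\xi_i}g)+(-1)^{p(f)}\sum_i\partial_{\xi_i}f\,\partial_{\xi_i}g$, and $\mathfrak g=K(1,4)_+\oplus\mathbb CC$ the central extension by the 2-cocycle $\psi$ whose only nonzero values on the basis $\{t^m\xi_I\}$ are (up to skew-symmetry) $\psi(1,\xi_1\xi_2\xi_3\xi_4)=-2$, $\psi(\xi_i,\partial_{\xi_i}(\xi_1\xi_2\xi_3\xi_4))=-1$. Grade by $\deg t^m\xi_I=2m+|I|-2$, $\deg C=0$; $\mathfrak g_0=\langle C,t,\xi_{ij}\rangle$. Let $\eta_i$ be the image of $\xi_i$ in $U(\mathfrak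 g_{<0})$; $w_{11}=\eta_2+i\eta_1$, $w_{22}=\eta_2-i\eta_1$, $w_{12}=-\eta_4+i\eta_3$, $w_{21}=\eta_4+i\eta_3$. The semisimple part $\mathfrak g_0^{ss}$ is spanned by $e_x=\frac12(-\xi_{13}-\xi_{24}-i\xi_{14}+i\xi_{23})$, $f_x=\frac12(\xi_{13}+\xi_{24}-i\xi_{14}+i\xi_{23})$, $h_x=-i\xi_{12}+i\xi_{34}$, $e_y=\frac12(-\xi_{13}+\xi_{24}+i\xi_{14}+i\xi_{23})$, $f_y=\frac12(\xi_{13}-\xi_{24}+i\xi_{14}+i\xi_{23})$, $h_y=-i\xi_{12}-i\xi_{34}$, identified with $x_1\partial_{x_2},x_2\partial_{x_1},x_1\partial_{x_1}-x_2\partial_{x_2},y_1\partial_{y_2},y_2\partial_{y_1},y_1\partial_{y_1}-y_2\partial_{y_2}$ respectively. Let $V_A=\mathbb C[x_1,x_2,y_1,y_2]$, $V_B=\mathbb C[\partial_{x_1},\partial_{x_2},y_1,y_2]$, $V_C=\mathbb C[\partial_{x_1},\partial_{x_2},\partial_{y_1},\partial_{y_2}]$, $V_D=\mathbb C[x_1,x_2,\partial_{y_1},\partial_{y_2}]$ (polynomials in commuting variables), on which $\mathfrak g_0^{ss}$ acts by derivations with $x_i\partial_{x_j}(x_k)=\delta_{jk}x_i$, $x_i\partial_{x_j}(\partial_{x_k})=-\delta_{ik}\partial_{x_j}$, $x_i\partial_{x_j}$ killing $y$- and $\partial_y$-variables, and symmetrically for $y$. Let $E_x,E_y$ be the derivations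 $x_1\partial_{x_1}+x_2\partial_{x_2}$, $y_1\partial_{y_1}+y_2\partial_{y_2}$ with the same rule; $t$ acts as $-\frac12(E_x+E_y)+i_X$ and $C$ as $\frac12(E_x-E_y)+j_X$, $(i_X,j_X)=(0,0),(1,-1),(2,0),(1,1)$ for $X=A,B,C,D$. $V_X^{m,n}$ is the subspace where $E_x=m,E_y=n$ (an irreducible $\mathfrak g_0$-module). $M_X^{m,n}=U(\mathfrak g)\otimes_{U(\mathfrak g_{\ge0})}V_X^{m,n}\cong U(\mathfrak g_{<0})\otimes V_X^{m,n}$ with $\mathfrak g_{>0}$ acting trivially on $V_X^{m,n}$, and $M_X=\bigoplus_{m,n}M_X^{m,n}$. For $u\in U(\mathfrak g_{<0})$ and linear $\phi:V_X\to V_Y$, $(u\otimes\phi)(u'\otimes v)=u'u\otimes\phi(v)$. On $V_X$, $\partial_{x_j}$ is differentiation in $x_j$ for $X\in\{A,D\}$ and multiplication by $\partial_{x_j}$ for $X\in\{B,C\}$; $\partial_{y_j}$ is differentiation in $y_j$ for $X\in\{A,B\}$ and multiplication by $\partial_{y_j}$ for $X\in\{C,D\}$. $\nabla=\sum_{a,b\in\{1,2\}}w_{ab}\otimes\partial_{x_a}\partial_{y_b}$. *)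

theory Defs
  imports Complex_Main "HOL-Library.Poly_Mapping"
begin

definition cmul :: "complex \<Rightarrow> ('a \<Rightarrow>\<^sub>0 complex) \<Rightarrow> ('a \<Rightarrow>\<^sub>0 complex)" where
  "cmul c p = Poly_Mapping.map (\<lambda>x. c * x) p"

definition lext :: "('a \<Rightarrow> ('b \<Rightarrow>\<^sub>0 complex)) \<Rightarrow> ('a \<Rightarrow>\<^sub>0 complex) \<Rightarrow> ('b \<Rightarrow>\<^sub>0 complex)" where
  "lext f p = (\<Sum>a\<in>Poly_Mapping.keys p. cmul (Poly_Mapping.lookup p a) (f a))"

section \<open>The Lie superalgebra g = K(1,4)_+ + C C, on its basis\<close>

datatype idx = J1 | J2 | J3 | J4

fun ordi :: "idx \<Rightarrow> nat" where
  "ordi J1 = 1" | "ordi J2 = 2" | "ordi J3 = 3" | "ordi J4 = 4"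

definition allidx :: "idx set" where "allidx = {J1, J2, J3, J4}"

text \<open>basis of g: Kb m I stands for t^m xi_I (xi_I ordered increasingly), Cb for the central C\<close>
datatype gb = Kb nat "idx set" | Cb

fun par :: "gb \<Rightarrow> nat" where
  "par (Kb m I) = card I mod 2" | "par Cb = 0"

fun gdeg :: "gb \<Rightarrow> int" where
  "gdeg (Kb m I) = 2 * int m + int (card I) - 2" | "gdeg Cb = 0"

text \<open>xi_I xi_J = gsign I J * xi_(I Un J)\<close>
definition gsign :: "idx set \<Rightarrow> idx set \<Rightarrow> complex" where
  "gsign I J = (if I \<inter> J \<noteq> {} then 0
     else (-1) ^ card {(a, b). a \<in> I \<and> b \<in> J \<and> ordi b < ordi a})"

text \<open>(left) derivative: d/dxi_i xi_I = fst (dxi i I) * xi_(snd (dxi i I))\<close>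
definition dxi :: "idx \<Rightarrow> idx set \<Rightarrow> complex \<times> idx set" where
  "dxi i I = (if i \<in> I then ((-1) ^ card {j \<in> I. ordi j < ordi i}, I - {i}) else (0, I))"

text \<open>bracket of K(1,4)_+ on basis elements t^m xi_I, t^n xi_J\<close>
definition kbr :: "nat \<Rightarrow> idx set \<Rightarrow> nat \<Rightarrow> idx set \<Rightarrow> (gb \<Rightarrow>\<^sub>0 complex)" where
  "kbr m I n J =
     Poly_Mapping.single (Kb (m + n - 1) (I \<union> J))
       (((2 - of_nat (card I)) * of_nat n - of_nat m * (2 - of_nat (card J))) * gsign I J)
   + cmul ((-1) ^ card I)
       (\<Sum>i\<in>allidx. Poly_Mapping.single (Kb (m + n) (snd (dxi i I) \<union> snd (dxi i J)))
            (fst (dxi i I) * fst (dxi i J) * gsign (snd (dxi i I)) (snd (dxi i J))))"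

text \<open>the 2-cocycle psi on basis elements\<close>
definition psi :: "nat \<Rightarrow> idx set \<Rightarrow> nat \<Rightarrow> idx set \<Rightarrow> complex" where
  "psi m I n J =
     (if m = 0 \<and> n = 0 \<and> I = {} \<and> J = allidx then -2
      else if m = 0 \<and> n = 0 \<and> I = allidx \<and> J = {} then 2
      else if m = 0 \<and> n = 0 \<and> (\<exists>i. I = {i} \<and> J = allidx - {i})
        then - fst (dxi (THE i. I = {i}) allidx)
      else if m = 0 \<and> n = 0 \<and> (\<exists>i. J = {i} \<and> I = allidx - {i})
        then - fst (dxi (THE i. J = {i}) allidx)
      else 0)"

fun gbr :: "gb \<Rightarrow> gb \<Rightarrow> (gb \<Rightarrow>\<^sub>0 complex)" where
  "gbr (Kb m I) (Kb n J) = kbr m I n J + Poly_Mapping.single Cb (psi m I n J)"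
| "gbr Cb _ = 0"
| "gbr _ Cb = 0"

section \<open>U(g_<0): basis Theta^k eta_I, encoded as (k, I)\<close>

type_synonym ub = "nat \<times> idx set"

definition lmul_eta :: "idx \<Rightarrow> ub \<Rightarrow> (ub \<Rightarrow>\<^sub>0 complex)" where
  "lmul_eta i u = (let k = fst u; I = snd u;
       s = (-1) ^ card {j \<in> I. ordi j < ordi i} :: complex in
     if i \<notin> I then Poly_Mapping.single (k, insert i I) s
     else Poly_Mapping.single (k + 1, I - {i}) (- s / 2))"

definition rmul_eta :: "idx \<Rightarrow> ub \<Rightarrow> (ub \<Rightarrow>\<^sub>0 complex)" where
  "rmul_eta i u = (let k = fst u; I = snd u;
       s = (-1) ^ card {j \<in> I. ordi i < ordi j} :: complex in
     if i \<notin> I then Poly_Mapping.single (k, insert i I) s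
     else Poly_Mapping.single (k + 1, I - {i}) (- s / 2))"

definition rmul_w :: "nat \<Rightarrow> nat \<Rightarrow> ub \<Rightarrow> (ub \<Rightarrow>\<^sub>0 complex)" where
  "rmul_w a b u =
     (if a = 1 \<and> b = 1 then rmul_eta J2 u + cmul \<i> (rmul_eta J1 u)
      else if a = 2 \<and> b = 2 then rmul_eta J2 u - cmul \<i> (rmul_eta J1 u)
      else if a = 1 \<and> b = 2 then - rmul_eta J4 u + cmul \<i> (rmul_eta J3 u)
      else rmul_eta J4 u + cmul \<i> (rmul_eta J3 u))"

datatype VX = XA | XB | XC | XD

text \<open>monomial (a1,a2,c1,c2): exponents of the two x-slot variables (x_j or d_x_j)
  and of the two y-slot variables (y_j or d_y_j)\<close>
type_synonym mono = "nat \<times> nat \<times> nat \<times> nat"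

definition xdual :: "VX \<Rightarrow> bool" where "xdual X = (X = XB \<or> X = XC)"
definition ydual :: "VX \<Rightarrow> bool" where "ydual X = (X = XC \<or> X = XD)"

definition Ex :: "VX \<Rightarrow> mono \<Rightarrow> int" where
  "Ex X v = (case v of (a1, a2, c1, c2) \<Rightarrow>
      if xdual X then - int (a1 + a2) else int (a1 + a2))"
definition Ey :: "VX \<Rightarrow> mono \<Rightarrow> int" where
  "Ey X v = (case v of (a1, a2, c1, c2) \<Rightarrow>
      if ydual X then - int (c1 + c2) else int (c1 + c2))"

definition iX :: "VX \<Rightarrow> int" where
  "iX X = (case X of XA \<Rightarrow> 0 | XB \<Rightarrow> 1 | XC \<Rightarrow> 2 | XD \<Rightarrow> 1)"
definition jX :: "VX \<Rightarrow> int" where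
  "jX X = (case X of XA \<Rightarrow> 0 | XB \<Rightarrow> -1 | XC \<Rightarrow> 0 | XD \<Rightarrow> 1)"

text \<open>action of z_i d_(z_j) (i,j in {1,2}) on a monomial z^a of one slot, as
  (coefficient, new exponents); dual = the slot consists of the d_(z_k)\<close>
definition slot_op :: "bool \<Rightarrow> nat \<Rightarrow> nat \<Rightarrow> nat \<times> nat \<Rightarrow> complex \<times> (nat \<times> nat)" where
  "slot_op dual i j a = (case a of (a1, a2) \<Rightarrow>
     if \<not> dual then
       (if i = 1 \<and> j = 1 then (of_nat a1, (a1, a2))
        else if i = 2 \<and> j = 2 then (of_nat a2, (a1, a2))
        else if i = 1 \<and> j = 2 then (of_nat a2, (a1 + 1, a2 - 1))
        else (of_nat a1, (a1 - 1, a2 + 1)))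
     else
       (if i = 1 \<and> j = 1 then (- of_nat a1, (a1, a2))
        else if i = 2 \<and> j = 2 then (- of_nat a2, (a1, a2))
        else if i = 1 \<and> j = 2 then (- of_nat a1, (a1 - 1, a2 + 1))
        else (- of_nat a2, (a1 + 1, a2 - 1))))"

definition xop :: "VX \<Rightarrow> nat \<Rightarrow> nat \<Rightarrow> mono \<Rightarrow> (mono \<Rightarrow>\<^sub>0 complex)" where
  "xop X i j v = (case v of (a1, a2, c1, c2) \<Rightarrow>
     (case slot_op (xdual X) i j (a1, a2) of (c, (b1, b2)) \<Rightarrow>
        Poly_Mapping.single (b1, b2, c1, c2) c))"
definition yop :: "VX \<Rightarrow> nat \<Rightarrow> nat \<Rightarrow> mono \<Rightarrow> (mono \<Rightarrow>\<^sub>0 complex)" where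
  "yop X i j v = (case v of (a1, a2, c1, c2) \<Rightarrow>
     (case slot_op (ydual X) i j (c1, c2) of (c, (d1, d2)) \<Rightarrow>
        Poly_Mapping.single (a1, a2, d1, d2) c))"

definition e_x where "e_x X v = xop X 1 2 v"
definition f_x where "f_x X v = xop X 2 1 v"
definition h_x where "h_x X v = xop X 1 1 v - xop X 2 2 v"
definition e_y where "e_y X v = yop X 1 2 v"
definition f_y where "f_y X v = yop X 2 1 v"
definition h_y where "h_y X v = yop X 1 1 v - yop X 2 2 v"

text \<open>action of the basis of g_0 on a monomial of V_X, obtained by inverting the
  given formulas for e_x, f_x, h_x, e_y, f_y, h_y in terms of xi_ij\<close>
definition g0act :: "VX \<Rightarrow> gb \<Rightarrow> mono \<Rightarrow> (mono \<Rightarrow>\<^sub>0 complex)" where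
  "g0act X b v = (case b of
      Cb \<Rightarrow> Poly_Mapping.single v (of_int (Ex X v - Ey X v) / 2 + of_int (jX X))
    | Kb m I \<Rightarrow>
       (if m = 1 \<and> I = {} then
          Poly_Mapping.single v (- of_int (Ex X v + Ey X v) / 2 + of_int (iX X))
        else if m = 0 \<and> I = {J1, J2} then cmul (\<i> / 2) (h_x X v + h_y X v)
        else if m = 0 \<and> I = {J3, J4} then cmul (- \<i> / 2) (h_x X v - h_y X v)
        else if m = 0 \<and> I = {J1, J3} then cmul (1 / 2) (f_x X v - e_x X v + f_y X v - e_y X v)
        else if m = 0 \<and> I = {J2, J4} then cmul (1 / 2) (f_x X v - e_x X v - f_y X v + e_y X v)
        else if m = 0 \<and> I = {J2, J3} then cmul (- \<i> / 2) (e_x X v + f_x X v + e_y X v + f_y X v)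
        else if m = 0 \<and> I = {J1, J4} then cmul (- \<i> / 2) (e_y X v + f_y X v - e_x X v - f_x X v)
        else 0))"

definition dx :: "VX \<Rightarrow> nat \<Rightarrow> mono \<Rightarrow> (mono \<Rightarrow>\<^sub>0 complex)" where
  "dx X a v = (case v of (a1, a2, c1, c2) \<Rightarrow>
     if xdual X then
       (if a = 1 then Poly_Mapping.single (a1 + 1, a2, c1, c2) 1
        else Poly_Mapping.single (a1, a2 + 1, c1, c2) 1)
     else
       (if a = 1 then Poly_Mapping.single (a1 - 1, a2, c1, c2) (of_nat a1)
        else Poly_Mapping.single (a1, a2 - 1, c1, c2) (of_nat a2)))"
definition dy :: "VX \<Rightarrow> nat \<Rightarrow> mono \<Rightarrow> (mono \<Rightarrow>\<^sub>0 complex)" where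
  "dy X b v = (case v of (a1, a2, c1, c2) \<Rightarrow>
     if ydual X then
       (if b = 1 then Poly_Mapping.single (a1, a2, c1 + 1, c2) 1
        else Poly_Mapping.single (a1, a2, c1, c2 + 1) 1)
     else
       (if b = 1 then Poly_Mapping.single (a1, a2, c1 - 1, c2) (of_nat c1)
        else Poly_Mapping.single (a1, a2, c1, c2 - 1) (of_nat c2)))"

section \<open>The induced modules M_X = U(g_<0) (x) V_X\<close>

type_synonym melt = "(ub \<times> mono) \<Rightarrow>\<^sub>0 complex"

definition tensor :: "(ub \<Rightarrow>\<^sub>0 complex) \<Rightarrow> (mono \<Rightarrow>\<^sub>0 complex) \<Rightarrow> melt" where
  "tensor u v = (\<Sum>p\<in>Poly_Mapping.keys u. \<Sum>q\<in>Poly_Mapping.keys v.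
      Poly_Mapping.single (p, q) (Poly_Mapping.lookup u p * Poly_Mapping.lookup v q))"

definition Mspace :: "VX \<Rightarrow> int \<Rightarrow> int \<Rightarrow> melt set" where
  "Mspace X m n = {x. \<forall>k\<in>Poly_Mapping.keys x. Ex X (snd k) = m \<and> Ey X (snd k) = n}"

text \<open>nabla = sum_(a,b) w_ab (x) d_(x_a) d_(y_b), with (w (x) phi)(u' (x) v) = u' w (x) phi v\<close>
definition nabla :: "VX \<Rightarrow> melt \<Rightarrow> melt" where
  "nabla X = lext (\<lambda>(u, v). \<Sum>a\<in>{1, 2}. \<Sum>b\<in>{1, 2}.
                      tensor (rmul_w a b u) (lext (dy X b) (dx X a v)))"

definition gact :: "(gb \<Rightarrow> melt \<Rightarrow> melt) \<Rightarrow> (gb \<Rightarrow>\<^sub>0 complex) \<Rightarrow> melt \<Rightarrow> melt" where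
  "gact rho z x = (\<Sum>c\<in>Poly_Mapping.keys z. cmul (Poly_Mapping.lookup z c) (rho c x))"

text \<open>rho (given on the basis of g) is the g-module structure of the induced module
  U(g) (x)_(U(g_>=0)) V_X, realised on U(g_<0) (x) V_X via PBW: it is a representation of
  the Lie superalgebra g, g_<0 acts by left multiplication, and on 1 (x) V_X the
  subalgebra g_0 acts through V_X while g_>0 acts by zero.  These conditions determine
  rho uniquely.\<close>
definition induced_rep :: "VX \<Rightarrow> (gb \<Rightarrow> melt \<Rightarrow> melt) \<Rightarrow> bool" where
  "induced_rep X rho \<longleftrightarrow>
     (\<forall>b x y. rho b (x + y) = rho b x + rho b y) \<and>
     (\<forall>b c x. rho b (cmul c x) = cmul c (rho b x)) \<and>
     (\<forall>b1 b2 x. rho b1 (rho b2 x) - cmul ((-1) ^ (par b1 * par b2)) (rho b2 (rho b1 x))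
                 = gact rho (gbr b1 b2) x) \<and>
     (\<forall>u v. rho (Kb 0 {}) (Poly_Mapping.single (u, v) 1)
              = Poly_Mapping.single ((fst u + 1, snd u), v) 1) \<and>
     (\<forall>i u v. rho (Kb 0 {i}) (Poly_Mapping.single (u, v) 1)
              = tensor (lmul_eta i u) (Poly_Mapping.single v 1)) \<and>
     (\<forall>b v. gdeg b = 0 \<longrightarrow> rho b (Poly_Mapping.single ((0, {}), v) 1)
              = tensor (Poly_Mapping.single (0, {}) 1) (g0act X b v)) \<and>
     (\<forall>b v. gdeg b > 0 \<longrightarrow> rho b (Poly_Mapping.single ((0, {}), v) 1) = 0)"

end

theory Submission
  imports Defs
begin

lemma lookup_cmul [simp]: "Poly_Mapping.lookup (cmul c p) k = c * Poly_Mapping.lookup p k"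
  unfolding cmul_def by (simp add: Poly_Mapping.map.rep_eq when_def)

lemma cmul_add [simp]: "cmul c (p + q) = cmul c p + cmul c q"
  by (rule poly_mapping_eqI) (simp add: lookup_add algebra_simps)
lemma cmul_add2: "cmul (c + d) p = cmul c p + cmul d p"
  by (rule poly_mapping_eqI) (simp add: lookup_add algebra_simps)
lemma cmul_diff [simp]: "cmul c (p - q) = cmul c p - cmul c q"
  by (rule poly_mapping_eqI) (simp add: lookup_minus algebra_simps)
lemma cmul_uminus [simp]: "cmul c (- p) = - cmul c p"
  by (rule poly_mapping_eqI) (simp)
lemma cmul_cmul [simp]: "cmul c (cmul d p) = cmul (c * d) p"
  by (rule poly_mapping_eqI) (simp)
lemma cmul_zero [simp]: "cmul c 0 = 0"
  by (rule poly_mapping_eqI) (simp)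
lemma cmul_zero2 [simp]: "cmul 0 p = 0"
  by (rule poly_mapping_eqI) (simp)
lemma cmul_one [simp]: "cmul 1 p = p"
  by (rule poly_mapping_eqI) (simp)
lemma cmul_single [simp]: "cmul c (Poly_Mapping.single k d) = Poly_Mapping.single k (c * d)"
  by (rule poly_mapping_eqI) (simp add: lookup_single when_def)
lemma cmul_sum: "cmul c (sum f A) = (\<Sum>a\<in>A. cmul c (f a))"
  by (rule poly_mapping_eqI) (simp add: lookup_sum sum_distrib_left)

lemma lext_superset:
  assumes "finite S" "Poly_Mapping.keys p \<subseteq> S"
  shows "lext f p = (\<Sum>a\<in>S. cmul (Poly_Mapping.lookup p a) (f a))"
  unfolding lext_def
  by (rule sum.mono_neutral_left) (use assms in \<open>auto simp: in_keys_iff\<close>)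

lemma lookup_lext: "Poly_Mapping.lookup (lext f p) k =
   (\<Sum>a\<in>Poly_Mapping.keys p. Poly_Mapping.lookup p a * Poly_Mapping.lookup (f a) k)"
  unfolding lext_def by (simp add: lookup_sum)

lemma lext_add [simp]: "lext f (p + q) = lext f p + lext f q"
proof -
  let ?S = "Poly_Mapping.keys p \<union> Poly_Mapping.keys q"
  have k: "Poly_Mapping.keys (p + q) \<subseteq> ?S" by (rule keys_add)
  show ?thesis
    by (subst (1 2 3) lext_superset[where S = ?S]) 
       (use k in \<open>auto simp: lookup_add cmul_add2 sum.distrib\<close>)
qed

lemma lext_cmul [simp]: "lext f (cmul c p) = cmul c (lext f p)"
proof -
  have k: "Poly_Mapping.keys (cmul c p) \<subseteq> Poly_Mapping.keys p"
    by (auto simp: in_keys_iff)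
  show ?thesis
    by (subst (1 2) lext_superset[where S = "Poly_Mapping.keys p"])
       (use k in \<open>auto simp: cmul_sum\<close>)
qed

lemma lext_zero [simp]: "lext f 0 = 0"
  unfolding lext_def by simp

lemma lext_uminus [simp]: "lext f (- p) = - lext f p"
  by (metis add_eq_0_iff2 lext_add lext_zero)

lemma lext_diff [simp]: "lext f (p - q) = lext f p - lext f q"
  by (metis add_diff_cancel diff_add_cancel lext_add)

lemma lext_single [simp]: "lext f (Poly_Mapping.single k c) = cmul c (f k)"
  by (subst lext_superset[where S = "{k}"]) (auto simp: lookup_single)

lemma lext_sum: "lext f (sum g A) = (\<Sum>a\<in>A. lext f (g a))"
  by (induction A rule: infinite_finite_induct) auto

lemma lext_fadd: "lext (\<lambda>x. f x + g x) p = lext f p + lext g p"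
  unfolding lext_def by (simp add: sum.distrib)
lemma lext_fdiff: "lext (\<lambda>x. f x - g x) p = lext f p - lext g p"
  unfolding lext_def by (simp add: sum_subtractf)
lemma lext_fcmul: "lext (\<lambda>x. cmul c (f x)) p = cmul c (lext f p)"
  unfolding lext_def by (simp add: cmul_sum mult.commute)
lemma lext_fsum: "lext (\<lambda>x. \<Sum>i\<in>A. f i x) p = (\<Sum>i\<in>A. lext (f i) p)"
  unfolding lext_def by (simp add: cmul_sum sum.swap[of _ A])
lemma lext_fzero: "lext (\<lambda>x. 0) p = 0"
  unfolding lext_def by simp

lemma lext_comp: "lext f (lext g p) = lext (\<lambda>x. lext f (g x)) p"
  by (subst (1 2) lext_def) (simp add: lext_sum)

lemma lext_cong: assumes "\<And>x. f x = g x" shows "lext f p = lext g p"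
proof -
  have "f = g" using assms by (rule ext)
  thus ?thesis by simp
qed

lemma sum_delta_mult: "finite A \<Longrightarrow> (\<Sum>a\<in>A. f a * (if a = k then 1 else 0)) = (if k \<in> A then f k else (0::'b::comm_semiring_1))"
proof -
  assume "finite A"
  have "(\<Sum>a\<in>A. f a * (if a = k then 1 else 0)) = (\<Sum>a\<in>A. if a = k then f a else 0)"
    by (rule sum.cong) auto
  thus ?thesis using \<open>finite A\<close> by (simp add: sum.delta')
qed

lemma lext_id: "lext (\<lambda>x. Poly_Mapping.single x 1) p = p"
  by (rule poly_mapping_eqI) (auto simp: lookup_lext lookup_single when_def in_keys_iff sum_delta_mult)

lemma lext_swap: "lext (\<lambda>x. lext (g x) q) p = lext (\<lambda>y. lext (\<lambda>x. g x y) p) q"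
  unfolding lext_def by (simp add: cmul_sum sum.swap[of _ "Poly_Mapping.keys p"] mult.commute)

lemma lext_commute:
  assumes "\<And>x. lext f (g x) = lext g (f x)"
  shows "lext f (lext g p) = lext g (lext f p)"
  by (simp add: lext_comp assms)

lemma lookup_tensor [simp]: "Poly_Mapping.lookup (tensor u v) (a, b) =
    Poly_Mapping.lookup u a * Poly_Mapping.lookup v b"
proof -
  have "Poly_Mapping.lookup (tensor u v) (a, b) =
     (\<Sum>p\<in>Poly_Mapping.keys u. \<Sum>q\<in>Poly_Mapping.keys v.
        (Poly_Mapping.lookup u p * Poly_Mapping.lookup v q when (p, q) = (a, b)))"
    unfolding tensor_def by (simp add: lookup_sum lookup_single)
  also have "\<dots> = Poly_Mapping.lookup u a * Poly_Mapping.lookup v b"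
  proof -
    have "\<And>p. (\<Sum>q\<in>Poly_Mapping.keys v. (Poly_Mapping.lookup u p * Poly_Mapping.lookup v q when (p, q) = (a, b)))
       = (if p = a then Poly_Mapping.lookup u p * Poly_Mapping.lookup v b else 0)"
      by (auto simp: when_def in_keys_iff sum.delta')
    hence "(\<Sum>p\<in>Poly_Mapping.keys u. \<Sum>q\<in>Poly_Mapping.keys v.
        (Poly_Mapping.lookup u p * Poly_Mapping.lookup v q when (p, q) = (a, b))) =
        (\<Sum>p\<in>Poly_Mapping.keys u. if p = a then Poly_Mapping.lookup u p * Poly_Mapping.lookup v b else 0)"
      by simp
    also have "\<dots> = Poly_Mapping.lookup u a * Poly_Mapping.lookup v b"
      by (auto simp: sum.delta' in_keys_iff)
    finally show ?thesis .
  qed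
  finally show ?thesis .
qed

lemma lookup_tensor': "Poly_Mapping.lookup (tensor u v) k =
    Poly_Mapping.lookup u (fst k) * Poly_Mapping.lookup v (snd k)"
  by (cases k) simp

lemma tensor_add1 [simp]: "tensor (p + q) v = tensor p v + tensor q v"
  by (rule poly_mapping_eqI) (simp add: lookup_tensor' lookup_add algebra_simps)
lemma tensor_add2 [simp]: "tensor v (p + q) = tensor v p + tensor v q"
  by (rule poly_mapping_eqI) (simp add: lookup_tensor' lookup_add algebra_simps)
lemma tensor_diff1 [simp]: "tensor (p - q) v = tensor p v - tensor q v"
  by (rule poly_mapping_eqI) (simp add: lookup_tensor' lookup_minus algebra_simps)
lemma tensor_diff2 [simp]: "tensor v (p - q) = tensor v p - tensor v q"
  by (rule poly_mapping_eqI) (simp add: lookup_tensor' lookup_minus algebra_simps)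
lemma tensor_cmul1 [simp]: "tensor (cmul c p) v = cmul c (tensor p v)"
  by (rule poly_mapping_eqI) (simp add: lookup_tensor' algebra_simps)
lemma tensor_cmul2 [simp]: "tensor v (cmul c p) = cmul c (tensor v p)"
  by (rule poly_mapping_eqI) (simp add: lookup_tensor' algebra_simps)
lemma tensor_zero1 [simp]: "tensor 0 v = 0"
  by (rule poly_mapping_eqI) (simp add: lookup_tensor')
lemma tensor_zero2 [simp]: "tensor v 0 = 0"
  by (rule poly_mapping_eqI) (simp add: lookup_tensor')
lemma tensor_sum1: "tensor (sum f A) v = (\<Sum>a\<in>A. tensor (f a) v)"
  by (induction A rule: infinite_finite_induct) auto
lemma tensor_sum2: "tensor v (sum f A) = (\<Sum>a\<in>A. tensor v (f a))"
  by (induction A rule: infinite_finite_induct) auto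
lemma tensor_single_single [simp]:
  "tensor (Poly_Mapping.single a c) (Poly_Mapping.single b d) = Poly_Mapping.single (a, b) (c * d)"
  by (rule poly_mapping_eqI) (auto simp: lookup_tensor' lookup_single when_def)

lemma tensor_lext2: "tensor v (lext f q) = lext (\<lambda>m. tensor v (f m)) q"
  unfolding lext_def by (simp add: tensor_sum2)
lemma tensor_lext1: "tensor (lext f p) v = lext (\<lambda>m. tensor (f m) v) p"
  unfolding lext_def by (simp add: tensor_sum1)

lemma tensor_decomp: "tensor p q = lext (\<lambda>a. lext (\<lambda>b. Poly_Mapping.single (a, b) 1) q) p"
proof -
  have "tensor p q = tensor (lext (\<lambda>x. Poly_Mapping.single x 1) p) (lext (\<lambda>x. Poly_Mapping.single x 1) q)"
    by (simp add: lext_id)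
  also have "\<dots> = lext (\<lambda>a. lext (\<lambda>b. Poly_Mapping.single (a, b) 1) q) p"
    by (simp add: tensor_lext1 tensor_lext2) (rule lext_swap)
  finally show ?thesis .
qed

lemma lext_tensor:
  "lext (\<lambda>(u, v). tensor (F u) (G v)) (tensor p q) = tensor (lext F p) (lext G q)"
  by (simp add: tensor_decomp[of p q] lext_comp tensor_lext1 tensor_lext2 lext_swap[of _ p q])

lemma poly_decomp: "p = (\<Sum>k\<in>Poly_Mapping.keys p. cmul (Poly_Mapping.lookup p k) (Poly_Mapping.single k 1))"
  using lext_id[of p] unfolding lext_def by simp



definition DX :: "VX \<Rightarrow> nat \<Rightarrow> (mono \<Rightarrow>\<^sub>0 complex) \<Rightarrow> (mono \<Rightarrow>\<^sub>0 complex)" where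
  "DX X a q = lext (dx X a) q"
definition DY :: "VX \<Rightarrow> nat \<Rightarrow> (mono \<Rightarrow>\<^sub>0 complex) \<Rightarrow> (mono \<Rightarrow>\<^sub>0 complex)" where
  "DY X a q = lext (dy X a) q"
definition XO :: "VX \<Rightarrow> nat \<Rightarrow> nat \<Rightarrow> (mono \<Rightarrow>\<^sub>0 complex) \<Rightarrow> (mono \<Rightarrow>\<^sub>0 complex)" where
  "XO X i j q = lext (xop X i j) q"
definition YO :: "VX \<Rightarrow> nat \<Rightarrow> nat \<Rightarrow> (mono \<Rightarrow>\<^sub>0 complex) \<Rightarrow> (mono \<Rightarrow>\<^sub>0 complex)" where
  "YO X i j q = lext (yop X i j) q"

lemma lift2:
  assumes "\<And>v. lext f (g v) = lext h (k v)"
  shows "lext f (lext g q) = lext h (lext k q)"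
  by (simp add: lext_comp assms)

lemma lift3:
  assumes "\<And>v. lext f (g v) = lext h (k v) + r v"
  shows "lext f (lext g q) = lext h (lext k q) + lext r q"
  by (simp add: lext_comp assms lext_fadd)

lemmas vdefs = dx_def dy_def xop_def yop_def slot_op_def

lemma s_r1: "lext (dy X b) (dx X a v) = lext (dx X a) (dy X b v)"
proof -
  obtain a1 a2 c1 c2 where v: "v = (a1, a2, c1, c2)" by (cases v) auto
  show ?thesis unfolding v by (auto simp: vdefs algebra_simps)
qed

lemma s_r2: "lext (dy X b) (xop X i j v) = lext (xop X i j) (dy X b v)"
proof -
  obtain a1 a2 c1 c2 where v: "v = (a1, a2, c1, c2)" by (cases v) auto
  show ?thesis unfolding v by (auto simp: vdefs algebra_simps)
qed

lemma s_r3: "lext (yop X i j) (dx X a v) = lext (dx X a) (yop X i j v)"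
proof -
  obtain a1 a2 c1 c2 where v: "v = (a1, a2, c1, c2)" by (cases v) auto
  show ?thesis unfolding v by (auto simp: vdefs algebra_simps)
qed

lemma s_dxx: "lext (dx X 2) (dx X 1 v) = lext (dx X 1) (dx X 2 v)"
proof -
  obtain a1 a2 c1 c2 where v: "v = (a1, a2, c1, c2)" by (cases v) auto
  show ?thesis unfolding v by (auto simp: vdefs algebra_simps)
qed

lemma s_dyy: "lext (dy X 2) (dy X 1 v) = lext (dy X 1) (dy X 2 v)"
proof -
  obtain a1 a2 c1 c2 where v: "v = (a1, a2, c1, c2)" by (cases v) auto
  show ?thesis unfolding v by (auto simp: vdefs algebra_simps)
qed

lemma s_n1:
  assumes "i \<in> {1,2}" "j \<in> {1,2}" "a \<in> {1,2::nat}"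
  shows "lext (dx X a) (xop X i j v) = lext (xop X i j) (dx X a v) + (if i = a then dx X j v else 0)"
proof -
  obtain a1 a2 c1 c2 where v: "v = (a1, a2, c1, c2)" by (cases v) auto
  show ?thesis using assms unfolding v
    by (cases a1; cases a2)
       (auto simp: vdefs single_add[symmetric] algebra_simps)
qed

lemma s_m1:
  assumes "i \<in> {1,2}" "j \<in> {1,2}" "a \<in> {1,2::nat}"
  shows "lext (dy X a) (yop X i j v) = lext (yop X i j) (dy X a v) + (if i = a then dy X j v else 0)"
proof -
  obtain a1 a2 c1 c2 where v: "v = (a1, a2, c1, c2)" by (cases v) auto
  show ?thesis using assms unfolding v
    by (cases c1; cases c2)
       (auto simp: vdefs single_add[symmetric] algebra_simps)
qed

lemma s_n2:
  assumes "\<not> xdual X" "i \<in> {1,2::nat}"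
  shows "lext (xop X i 2) (dx X 1 v) = lext (xop X i 1) (dx X 2 v)"
proof -
  obtain a1 a2 c1 c2 where v: "v = (a1, a2, c1, c2)" by (cases v) auto
  show ?thesis using assms unfolding v
    by (cases a1; cases a2)
       (auto simp: vdefs single_add[symmetric] algebra_simps)
qed

lemma s_m2:
  assumes "\<not> ydual X" "i \<in> {1,2::nat}"
  shows "lext (yop X i 2) (dy X 1 v) = lext (yop X i 1) (dy X 2 v)"
proof -
  obtain a1 a2 c1 c2 where v: "v = (a1, a2, c1, c2)" by (cases v) auto
  show ?thesis using assms unfolding v
    by (cases c1; cases c2)
       (auto simp: vdefs single_add[symmetric] algebra_simps)
qed

lemma s_d2:
  assumes "xdual X" "i \<in> {1,2::nat}"
  shows "lext (dx X 1) (xop X i 2 v) = lext (dx X 2) (xop X i 1 v)"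
proof -
  obtain a1 a2 c1 c2 where v: "v = (a1, a2, c1, c2)" by (cases v) auto
  show ?thesis using assms unfolding v
    by (cases a1; cases a2)
       (auto simp: vdefs single_add[symmetric] algebra_simps)
qed

lemma s_e2:
  assumes "ydual X" "i \<in> {1,2::nat}"
  shows "lext (dy X 1) (yop X i 2 v) = lext (dy X 2) (yop X i 1 v)"
proof -
  obtain a1 a2 c1 c2 where v: "v = (a1, a2, c1, c2)" by (cases v) auto
  show ?thesis using assms unfolding v
    by (cases c1; cases c2)
       (auto simp: vdefs single_add[symmetric] algebra_simps)
qed

lemma s_ex: "Poly_Mapping.single v (of_int (Ex X v)) = xop X 1 1 v + xop X 2 2 v"
proof -
  obtain a1 a2 c1 c2 where v: "v = (a1, a2, c1, c2)" by (cases v) auto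
  show ?thesis unfolding v by (auto simp: vdefs Ex_def single_add[symmetric] algebra_simps)
qed

lemma s_ey: "Poly_Mapping.single v (of_int (Ey X v)) = yop X 1 1 v + yop X 2 2 v"
proof -
  obtain a1 a2 c1 c2 where v: "v = (a1, a2, c1, c2)" by (cases v) auto
  show ?thesis unfolding v by (auto simp: vdefs Ey_def single_add[symmetric] algebra_simps)
qed

lemma idx_exhaust_all: "(\<forall>x::idx. P x) \<longleftrightarrow> P J1 \<and> P J2 \<and> P J3 \<and> P J4"
  by (metis idx.exhaust)
lemma idx_exhaust_ex: "(\<exists>x::idx. P x) \<longleftrightarrow> P J1 \<or> P J2 \<or> P J3 \<or> P J4"
  by (metis idx.exhaust)
lemma idx_set_eq: "(A::idx set) = B \<longleftrightarrow> (J1 \<in> A \<longleftrightarrow> J1 \<in> B) \<and> (J2 \<in> A \<longleftrightarrow> J2 \<in> B) \<and> (J3 \<in> A \<longleftrightarrow> J3 \<in> B) \<and> (J4 \<in> A \<longleftrightarrow> J4 \<in> B)"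
  by (auto simp: set_eq_iff) (metis idx.exhaust)+

lemma DX_lin [simp]: "DX X a (p + q) = DX X a p + DX X a q" "DX X a (p - q) = DX X a p - DX X a q"
  "DX X a (cmul c p) = cmul c (DX X a p)" "DX X a 0 = 0" "DX X a (- p) = - DX X a p"
  by (simp_all add: DX_def)
lemma DY_lin [simp]: "DY X a (p + q) = DY X a p + DY X a q" "DY X a (p - q) = DY X a p - DY X a q"
  "DY X a (cmul c p) = cmul c (DY X a p)" "DY X a 0 = 0" "DY X a (- p) = - DY X a p"
  by (simp_all add: DY_def)
lemma XO_lin [simp]: "XO X i j (p + q) = XO X i j p + XO X i j q" "XO X i j (p - q) = XO X i j p - XO X i j q"
  "XO X i j (cmul c p) = cmul c (XO X i j p)" "XO X i j 0 = 0" "XO X i j (- p) = - XO X i j p"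
  by (simp_all add: XO_def)
lemma YO_lin [simp]: "YO X i j (p + q) = YO X i j p + YO X i j q" "YO X i j (p - q) = YO X i j p - YO X i j q"
  "YO X i j (cmul c p) = cmul c (YO X i j p)" "YO X i j 0 = 0" "YO X i j (- p) = - YO X i j p"
  by (simp_all add: YO_def)

lemma r1: "DY X b (DX X a q) = DX X a (DY X b q)"
  unfolding DX_def DY_def by (rule lift2) (rule s_r1)
lemma r2: "DY X b (XO X i j q) = XO X i j (DY X b q)"
  unfolding XO_def DY_def by (rule lift2) (rule s_r2)
lemma r3: "YO X i j (DX X a q) = DX X a (YO X i j q)"
  unfolding YO_def DX_def by (rule lift2) (rule s_r3)
lemma dxx: "DX X 2 (DX X 1 q) = DX X 1 (DX X 2 q)"
  unfolding DX_def by (rule lift2) (rule s_dxx)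
lemma dyy: "DY X 2 (DY X 1 q) = DY X 1 (DY X 2 q)"
  unfolding DY_def by (rule lift2) (rule s_dyy)

lemma n1c: assumes "i \<in> {1,2}" "j \<in> {1,2}" "a \<in> {1,2::nat}"
  shows "DX X a (XO X i j q) = XO X i j (DX X a q) + (if i = a then DX X j q else 0)"
proof -
  have "DX X a (XO X i j q) = XO X i j (DX X a q) + lext (\<lambda>v. if i = a then dx X j v else 0) q"
    unfolding DX_def XO_def by (rule lift3) (rule s_n1[OF assms])
  thus ?thesis by (simp add: DX_def lext_fzero)
qed
lemma m1c: assumes "i \<in> {1,2}" "j \<in> {1,2}" "a \<in> {1,2::nat}"
  shows "DY X a (YO X i j q) = YO X i j (DY X a q) + (if i = a then DY X j q else 0)"
proof -
  have "DY X a (YO X i j q) = YO X i j (DY X a q) + lext (\<lambda>v. if i = a then dy X j v else 0) q"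
    unfolding DY_def YO_def by (rule lift3) (rule s_m1[OF assms])
  thus ?thesis by (simp add: DY_def lext_fzero)
qed

lemma n1: "\<not> xdual X \<Longrightarrow> i \<in> {1,2} \<Longrightarrow> j \<in> {1,2} \<Longrightarrow> a \<in> {1,2::nat} \<Longrightarrow>
  DX X a (XO X i j q) = XO X i j (DX X a q) + (if i = a then DX X j q else 0)"
  by (rule n1c)
lemma d1: "xdual X \<Longrightarrow> i \<in> {1,2} \<Longrightarrow> j \<in> {1,2} \<Longrightarrow> a \<in> {1,2::nat} \<Longrightarrow>
  XO X i j (DX X a q) = DX X a (XO X i j q) - (if i = a then DX X j q else 0)"
  using n1c[of i j a X q] by simp
lemma m1: "\<not> ydual X \<Longrightarrow> i \<in> {1,2} \<Longrightarrow> j \<in> {1,2} \<Longrightarrow> a \<in> {1,2::nat} \<Longrightarrow>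
  DY X a (YO X i j q) = YO X i j (DY X a q) + (if i = a then DY X j q else 0)"
  by (rule m1c)
lemma e1: "ydual X \<Longrightarrow> i \<in> {1,2} \<Longrightarrow> j \<in> {1,2} \<Longrightarrow> a \<in> {1,2::nat} \<Longrightarrow>
  YO X i j (DY X a q) = DY X a (YO X i j q) - (if i = a then DY X j q else 0)"
  using m1c[of i j a X q] by simp

lemma n2: "\<not> xdual X \<Longrightarrow> i \<in> {1,2::nat} \<Longrightarrow> XO X i 2 (DX X 1 q) = XO X i 1 (DX X 2 q)"
  unfolding XO_def DX_def by (rule lift2) (rule s_n2)
lemma d2: "xdual X \<Longrightarrow> i \<in> {1,2::nat} \<Longrightarrow> DX X 1 (XO X i 2 q) = DX X 2 (XO X i 1 q)"
  unfolding XO_def DX_def by (rule lift2) (rule s_d2)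
lemma m2: "\<not> ydual X \<Longrightarrow> i \<in> {1,2::nat} \<Longrightarrow> YO X i 2 (DY X 1 q) = YO X i 1 (DY X 2 q)"
  unfolding YO_def DY_def by (rule lift2) (rule s_m2)
lemma e2: "ydual X \<Longrightarrow> i \<in> {1,2::nat} \<Longrightarrow> DY X 1 (YO X i 2 q) = DY X 2 (YO X i 1 q)"
  unfolding YO_def DY_def by (rule lift2) (rule s_e2)

definition G0 :: "VX \<Rightarrow> gb \<Rightarrow> (mono \<Rightarrow>\<^sub>0 complex) \<Rightarrow> (mono \<Rightarrow>\<^sub>0 complex)" where
  "G0 X b q = lext (g0act X b) q"

lemma G0_lin [simp]: "G0 X b (p + q) = G0 X b p + G0 X b q" "G0 X b (p - q) = G0 X b p - G0 X b q"
  "G0 X b (cmul c p) = cmul c (G0 X b p)" "G0 X b 0 = 0"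
  by (simp_all add: G0_def)

lemma g_C_s: "g0act X Cb v = cmul (1/2) (xop X 1 1 v + xop X 2 2 v - yop X 1 1 v - yop X 2 2 v)
   + cmul (of_int (jX X)) (Poly_Mapping.single v 1)"
proof -
  have "g0act X Cb v = cmul (1/2) (Poly_Mapping.single v (of_int (Ex X v)) - Poly_Mapping.single v (of_int (Ey X v)))
     + cmul (of_int (jX X)) (Poly_Mapping.single v 1)"
    by (simp add: g0act_def single_add[symmetric] single_diff[symmetric] diff_divide_distrib)
  thus ?thesis by (simp add: s_ex s_ey algebra_simps)
qed

lemma g_t_s: "g0act X (Kb 1 {}) v = cmul (-1/2) (xop X 1 1 v + xop X 2 2 v + yop X 1 1 v + yop X 2 2 v)
   + cmul (of_int (iX X)) (Poly_Mapping.single v 1)"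
proof -
  have "g0act X (Kb 1 {}) v = cmul (-1/2) (Poly_Mapping.single v (of_int (Ex X v)) + Poly_Mapping.single v (of_int (Ey X v)))
     + cmul (of_int (iX X)) (Poly_Mapping.single v 1)"
    by (simp add: g0act_def single_add[symmetric] add_divide_distrib diff_divide_distrib)
  thus ?thesis by (simp add: s_ex s_ey algebra_simps)
qed

lemmas g0defs = g0act_def e_x_def f_x_def h_x_def e_y_def f_y_def h_y_def idx_set_eq

lemma g_12_s: "g0act X (Kb 0 {J1, J2}) v = cmul (\<i>/2) (xop X 1 1 v - xop X 2 2 v + yop X 1 1 v - yop X 2 2 v)"
  by (simp add: g0defs)
lemma g_34_s: "g0act X (Kb 0 {J3, J4}) v = cmul (- \<i>/2) (xop X 1 1 v - xop X 2 2 v - yop X 1 1 v + yop X 2 2 v)"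
  by (simp add: g0defs)
lemma g_13_s: "g0act X (Kb 0 {J1, J3}) v = cmul (1/2) (xop X 2 1 v - xop X 1 2 v + yop X 2 1 v - yop X 1 2 v)"
  by (simp add: g0defs)
lemma g_24_s: "g0act X (Kb 0 {J2, J4}) v = cmul (1/2) (xop X 2 1 v - xop X 1 2 v - yop X 2 1 v + yop X 1 2 v)"
  by (simp add: g0defs)
lemma g_23_s: "g0act X (Kb 0 {J2, J3}) v = cmul (- \<i>/2) (xop X 1 2 v + xop X 2 1 v + yop X 1 2 v + yop X 2 1 v)"
  by (simp add: g0defs)
lemma g_14_s: "g0act X (Kb 0 {J1, J4}) v = cmul (- \<i>/2) (yop X 1 2 v + yop X 2 1 v - xop X 1 2 v - xop X 2 1 v)"
  by (simp add: g0defs)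

lemmas lext_lin = lext_fadd lext_fdiff lext_fcmul

lemma lext_scalar: "lext (\<lambda>v. Poly_Mapping.single v c) q = cmul c q"
proof -
  have "lext (\<lambda>v. Poly_Mapping.single v c) q = lext (\<lambda>v. cmul c (Poly_Mapping.single v 1)) q" by simp
  also have "\<dots> = cmul c q" by (simp only: lext_fcmul lext_id)
  finally show ?thesis .
qed

lemma g_C: "G0 X Cb q = cmul (1/2) (XO X 1 1 q + XO X 2 2 q - YO X 1 1 q - YO X 2 2 q) + cmul (of_int (jX X)) q"
  unfolding G0_def XO_def YO_def g_C_s by (simp add: lext_lin lext_scalar)
lemma g_t: "G0 X (Kb 1 {}) q = cmul (-1/2) (XO X 1 1 q + XO X 2 2 q + YO X 1 1 q + YO X 2 2 q) + cmul (of_int (iX X)) q"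
  unfolding G0_def XO_def YO_def g_t_s by (simp add: lext_lin lext_scalar)
lemma g_12: "G0 X (Kb 0 {J1, J2}) q = cmul (\<i>/2) (XO X 1 1 q - XO X 2 2 q + YO X 1 1 q - YO X 2 2 q)"
  unfolding G0_def XO_def YO_def g_12_s by (simp add: lext_lin)
lemma g_34: "G0 X (Kb 0 {J3, J4}) q = cmul (- \<i>/2) (XO X 1 1 q - XO X 2 2 q - YO X 1 1 q + YO X 2 2 q)"
  unfolding G0_def XO_def YO_def g_34_s by (simp add: lext_lin)
lemma g_13: "G0 X (Kb 0 {J1, J3}) q = cmul (1/2) (XO X 2 1 q - XO X 1 2 q + YO X 2 1 q - YO X 1 2 q)"
  unfolding G0_def XO_def YO_def g_13_s by (simp add: lext_lin)
lemma g_24: "G0 X (Kb 0 {J2, J4}) q = cmul (1/2) (XO X 2 1 q - XO X 1 2 q - YO X 2 1 q + YO X 1 2 q)"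
  unfolding G0_def XO_def YO_def g_24_s by (simp add: lext_lin)
lemma g_23: "G0 X (Kb 0 {J2, J3}) q = cmul (- \<i>/2) (XO X 1 2 q + XO X 2 1 q + YO X 1 2 q + YO X 2 1 q)"
  unfolding G0_def XO_def YO_def g_23_s by (simp add: lext_lin)
lemma g_14: "G0 X (Kb 0 {J1, J4}) q = cmul (- \<i>/2) (YO X 1 2 q + YO X 2 1 q - XO X 1 2 q - XO X 2 1 q)"
  unfolding G0_def XO_def YO_def g_14_s by (simp add: lext_lin)



lemma coll_insert: "{j \<in> insert a A. P j} = (if P a then insert a {j \<in> A. P j} else {j \<in> A. P j})"
  by auto
lemma coll_empty: "{j \<in> {}. P j} = {}" by auto

lemma idx_subsets: "(I::idx set) \<in> {{}, {J1}, {J2}, {J3}, {J4}, {J1,J2}, {J1,J3}, {J1,J4}, {J2,J3}, {J2,J4}, {J3,J4},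
   {J1,J2,J3}, {J1,J2,J4}, {J1,J3,J4}, {J2,J3,J4}, {J1,J2,J3,J4}}"
  by (cases "J1 \<in> I"; cases "J2 \<in> I"; cases "J3 \<in> I"; cases "J4 \<in> I") (simp_all add: idx_set_eq)

lemma UNIV_idx: "(UNIV::idx set) = {J1, J2, J3, J4}"
  using idx.exhaust by auto

lemma card_idx: "card (S::idx set) = (if J1 \<in> S then 1 else 0) + (if J2 \<in> S then 1 else 0)
   + (if J3 \<in> S then 1 else 0) + (if J4 \<in> S then 1 else 0)"
proof -
  have "card S = sum (\<lambda>x. 1) ({J1, J2, J3, J4} \<inter> S)"
    using UNIV_idx by (metis card_eq_sum inf_top.left_neutral)
  also have "\<dots> = sum (\<lambda>x. if x \<in> S then 1 else 0) {J1, J2, J3, J4}"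
    by (rule sum.inter_restrict) simp
  finally show ?thesis by simp
qed

lemmas usimps = lmul_eta_def rmul_eta_def Let_def card_idx insert_Diff_if

lemma "lext (rmul_eta J2) (rmul_eta J1 (k, {J1,J3})) + lext (rmul_eta J1) (rmul_eta J2 (k, {J1,J3})) = 0"
  by (simp add: usimps insert_commute single_add[symmetric])

lemma L1_s: "lext (rmul_eta j) (rmul_eta i (k, I)) + lext (rmul_eta i) (rmul_eta j (k, I)) =
   (if i = j then Poly_Mapping.single (k + 1, I) (-1) else 0)"
  using idx_subsets[of I]
  by (cases i; cases j; simp; elim disjE; simp add: usimps insert_commute single_add[symmetric])


lemma L2_s: "lext (lmul_eta i) (rmul_eta j (k, I)) = lext (rmul_eta j) (lmul_eta i (k, I))"
  using idx_subsets[of I]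
  by (cases i; cases j; simp; elim disjE; simp add: usimps insert_commute single_add[symmetric])

definition RR :: "nat \<Rightarrow> nat \<Rightarrow> nat \<Rightarrow> nat \<Rightarrow> ub \<Rightarrow> (ub \<Rightarrow>\<^sub>0 complex)" where
  "RR a b c d u = lext (rmul_w c d) (rmul_w a b u)"

lemmas rwsimps = RR_def rmul_w_def lext_add lext_cmul lext_diff lext_uminus

definition ind :: "'a \<Rightarrow> 'a \<Rightarrow> complex" where "ind k x = (if k = x then 1 else 0)"
lemma lookup_single_ind: "Poly_Mapping.lookup (Poly_Mapping.single k v) x = v * ind k x"
  by (simp add: lookup_single ind_def when_def)

lemma O1a: "RR 1 1 1 1 u = 0"
  using idx_subsets[of "snd u"]
  apply (cases u; simp add: rwsimps; elim disjE; simp add: rwsimps usimps insert_commute single_add[symmetric] algebra_simps)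
  apply ((rule poly_mapping_eqI, simp add: lookup_add lookup_single_ind algebra_simps)+)?
  done

lemma O1b: "RR 2 2 2 2 u = 0"
  using idx_subsets[of "snd u"]
  apply (cases u; simp add: rwsimps; elim disjE; simp add: rwsimps usimps insert_commute single_add[symmetric] algebra_simps)
  apply ((rule poly_mapping_eqI, simp add: lookup_add lookup_single_ind algebra_simps)+)?
  done

lemma O1c: "RR 1 2 1 2 u = 0"
  using idx_subsets[of "snd u"]
  apply (cases u; simp add: rwsimps; elim disjE; simp add: rwsimps usimps insert_commute single_add[symmetric] algebra_simps)
  apply ((rule poly_mapping_eqI, simp add: lookup_add lookup_single_ind algebra_simps)+)?
  done

lemma O1d: "RR 2 1 2 1 u = 0"
  using idx_subsets[of "snd u"]
  apply (cases u; simp add: rwsimps; elim disjE; simp add: rwsimps usimps insert_commute single_add[symmetric] algebra_simps)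
  apply ((rule poly_mapping_eqI, simp add: lookup_add lookup_single_ind algebra_simps)+)?
  done

lemma O2a: "RR 1 2 1 1 u = - RR 1 1 1 2 u"
  using idx_subsets[of "snd u"]
  apply (cases u; simp add: rwsimps; elim disjE; simp add: rwsimps usimps insert_commute single_add[symmetric] algebra_simps)
  apply ((rule poly_mapping_eqI, simp add: lookup_add lookup_single_ind algebra_simps)+)?
  done

lemma O2b: "RR 2 1 1 1 u = - RR 1 1 2 1 u"
  using idx_subsets[of "snd u"]
  apply (cases u; simp add: rwsimps; elim disjE; simp add: rwsimps usimps insert_commute single_add[symmetric] algebra_simps)
  apply ((rule poly_mapping_eqI, simp add: lookup_add lookup_single_ind algebra_simps)+)?
  done

lemma O2c: "RR 1 2 2 2 u = - RR 2 2 1 2 u"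
  using idx_subsets[of "snd u"]
  apply (cases u; simp add: rwsimps; elim disjE; simp add: rwsimps usimps insert_commute single_add[symmetric] algebra_simps)
  apply ((rule poly_mapping_eqI, simp add: lookup_add lookup_single_ind algebra_simps)+)?
  done

lemma O2d: "RR 2 1 2 2 u = - RR 2 2 2 1 u"
  using idx_subsets[of "snd u"]
  apply (cases u; simp add: rwsimps; elim disjE; simp add: rwsimps usimps insert_commute single_add[symmetric] algebra_simps)
  apply ((rule poly_mapping_eqI, simp add: lookup_add lookup_single_ind algebra_simps)+)?
  done

lemma O3: "RR 2 1 1 2 u = - RR 1 1 2 2 u - RR 2 2 1 1 u - RR 1 2 2 1 u"
  using idx_subsets[of "snd u"]
  apply (cases u; simp add: rwsimps; elim disjE; simp add: rwsimps usimps insert_commute single_add[symmetric] algebra_simps)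
  apply ((rule poly_mapping_eqI, simp add: lookup_add lookup_single_ind algebra_simps)+)?
  done



definition NF :: "VX \<Rightarrow> ub \<times> mono \<Rightarrow> melt" where
  "NF X = (\<lambda>(u, v). \<Sum>a\<in>{1, 2}. \<Sum>b\<in>{1, 2}. tensor (rmul_w a b u) (lext (dy X b) (dx X a v)))"

lemma nabla_NF: "nabla X = lext (NF X)"
  unfolding nabla_def NF_def by (rule ext) simp

lemma NF_split: "NF X = (\<lambda>x. \<Sum>a\<in>{1, 2}. \<Sum>b\<in>{1, 2}.
    (\<lambda>(u, v). tensor (rmul_w a b u) (lext (dy X b) (dx X a v))) x)"
  unfolding NF_def by (auto simp: fun_eq_iff)

lemma nabla_tensor: "nabla X (tensor p q) = (\<Sum>a\<in>{1, 2}. \<Sum>b\<in>{1, 2}.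
    tensor (lext (rmul_w a b) p) (DY X b (DX X a q)))"
proof -
  have "nabla X (tensor p q) = (\<Sum>a\<in>{1, 2}. \<Sum>b\<in>{1, 2}.
     lext (\<lambda>(u, v). tensor (rmul_w a b u) (lext (dy X b) (dx X a v))) (tensor p q))"
    unfolding nabla_NF NF_split by (simp only: lext_fsum)
  also have "\<dots> = (\<Sum>a\<in>{1, 2}. \<Sum>b\<in>{1, 2}. tensor (lext (rmul_w a b) p) (DY X b (DX X a q)))"
    by (simp only: lext_tensor DX_def DY_def lext_comp)
  finally show ?thesis .
qed

lemma nabla_add [simp]: "nabla X (x + y) = nabla X x + nabla X y"
  by (simp add: nabla_NF)
lemma nabla_cmul [simp]: "nabla X (cmul c x) = cmul c (nabla X x)"
  by (simp add: nabla_NF)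
lemma nabla_zero [simp]: "nabla X 0 = 0"
  by (simp add: nabla_NF)
lemma nabla_diff [simp]: "nabla X (x - y) = nabla X x - nabla X y"
  by (simp add: nabla_NF)
lemma nabla_sum: "nabla X (sum f A) = (\<Sum>a\<in>A. nabla X (f a))"
  by (simp add: nabla_NF lext_sum)

lemma NF_tensor: "NF X (u, v) = (\<Sum>a\<in>{1, 2}. \<Sum>b\<in>{1, 2}.
    tensor (rmul_w a b u) (DY X b (DX X a (Poly_Mapping.single v 1))))"
  unfolding NF_def DX_def DY_def by simp

lemma sum12: "(\<Sum>a\<in>{1, 2::nat}. f a) = f 1 + f 2" by simp

lemma nabla_NF_zero: "nabla X (NF X k) = 0"
proof -
  obtain u v where k: "k = (u, v)" by (cases k)
  show ?thesis
    unfolding k NF_tensor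
    apply (simp only: nabla_sum nabla_add nabla_tensor sum12 lext_single cmul_one)
    apply (simp only: RR_def[symmetric] r1 dxx dyy O1a O1b O1c O1d O2a O2b O2c O2d O3)
    apply (rule poly_mapping_eqI)
    apply (simp add: lookup_add lookup_minus lookup_tensor')
    done
qed

lemma nabla_nabla: "nabla X (nabla X x) = 0"
proof -
  have "nabla X (nabla X x) = lext (\<lambda>k. nabla X (NF X k)) x"
    by (simp add: nabla_NF lext_comp)
  also have "\<dots> = 0" by (simp add: nabla_NF_zero lext_fzero)
  finally show ?thesis .
qed


lemma keys_sum_sub: "k \<in> Poly_Mapping.keys (sum f A) \<Longrightarrow> \<exists>a\<in>A. k \<in> Poly_Mapping.keys (f a)"
proof (induction A rule: infinite_finite_induct)
  case (insert x F)
  then show ?case using keys_add[of "f x" "sum f F"] by auto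
qed auto

lemma keys_cmul_sub: "k \<in> Poly_Mapping.keys (cmul c p) \<Longrightarrow> k \<in> Poly_Mapping.keys p"
  by (auto simp: in_keys_iff)

lemma keys_lext: "k \<in> Poly_Mapping.keys (lext f p) \<Longrightarrow> \<exists>a\<in>Poly_Mapping.keys p. k \<in> Poly_Mapping.keys (f a)"
  unfolding lext_def by (auto dest!: keys_sum_sub keys_cmul_sub)

lemma keys_tensor: "k \<in> Poly_Mapping.keys (tensor p q) \<Longrightarrow> snd k \<in> Poly_Mapping.keys q"
  by (cases k) (auto simp: in_keys_iff)

lemma keys_dx: "k \<in> Poly_Mapping.keys (dx X a v) \<Longrightarrow> Ex X k = Ex X v - 1 \<and> Ey X k = Ey X v"
proof -
  assume k: "k \<in> Poly_Mapping.keys (dx X a v)"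
  obtain a1 a2 c1 c2 where v: "v = (a1, a2, c1, c2)" by (cases v) auto
  show ?thesis using k unfolding v
    by (cases "a = 1"; cases a1; cases a2) (auto simp: dx_def Ex_def Ey_def split: if_splits)
qed

lemma keys_dy: "k \<in> Poly_Mapping.keys (dy X a v) \<Longrightarrow> Ex X k = Ex X v \<and> Ey X k = Ey X v - 1"
proof -
  assume k: "k \<in> Poly_Mapping.keys (dy X a v)"
  obtain a1 a2 c1 c2 where v: "v = (a1, a2, c1, c2)" by (cases v) auto
  show ?thesis using k unfolding v
    by (cases "a = 1"; cases c1; cases c2) (auto simp: dy_def Ex_def Ey_def split: if_splits)
qed

lemma nabla_Mspace: "x \<in> Mspace X m n \<Longrightarrow> nabla X x \<in> Mspace X (m - 1) (n - 1)"
  unfolding Mspace_def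
proof (intro CollectI ballI)
  fix k assume x: "x \<in> {x. \<forall>k\<in>Poly_Mapping.keys x. Ex X (snd k) = m \<and> Ey X (snd k) = n}"
    and k: "k \<in> Poly_Mapping.keys (nabla X x)"
  from k obtain uv where uv: "uv \<in> Poly_Mapping.keys x" and k1: "k \<in> Poly_Mapping.keys (NF X uv)"
    unfolding nabla_NF by (auto dest!: keys_lext)
  obtain u v where uv': "uv = (u, v)" by (cases uv)
  from k1 have "k \<in> Poly_Mapping.keys (\<Sum>a\<in>{1, 2}. \<Sum>b\<in>{1, 2}. tensor (rmul_w a b u) (lext (dy X b) (dx X a v)))"
    unfolding uv' NF_def by (simp only: prod.case)
  then obtain a where "k \<in> Poly_Mapping.keys (\<Sum>b\<in>{1, 2}. tensor (rmul_w a b u) (lext (dy X b) (dx X a v)))"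
    by (blast dest: keys_sum_sub)
  then obtain b where "k \<in> Poly_Mapping.keys (tensor (rmul_w a b u) (lext (dy X b) (dx X a v)))"
    by (blast dest: keys_sum_sub)
  hence "snd k \<in> Poly_Mapping.keys (lext (dy X b) (dx X a v))" by (rule keys_tensor)
  then obtain v' where "v' \<in> Poly_Mapping.keys (dx X a v)" "snd k \<in> Poly_Mapping.keys (dy X b v')"
    by (auto dest!: keys_lext)
  hence "Ex X (snd k) = Ex X v - 1 \<and> Ey X (snd k) = Ey X v - 1"
    by (auto dest!: keys_dx keys_dy)
  moreover have "Ex X v = m \<and> Ey X v = n" using x uv uv' by auto
  ultimately show "Ex X (snd k) = m - 1 \<and> Ey X (snd k) = n - 1" by simp
qed

lemmas nzsimps = nabla_NF NF_tensor DX_def DY_def dx_def dy_def rmul_w_def rmul_eta_def Let_def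
  lookup_add lookup_minus lookup_tensor' lookup_single when_def

lemma single_Mspace: "Poly_Mapping.single ((0, {}), v) 1 \<in> Mspace X (Ex X v) (Ey X v)"
  unfolding Mspace_def by simp

lemma nzA: "1 \<le> m \<Longrightarrow> 1 \<le> n \<Longrightarrow> \<exists>x \<in> Mspace XA (int m) (int n). nabla XA x \<noteq> 0"
proof -
  assume "1 \<le> m" "1 \<le> n"
  let ?v = "(m, 0, n, 0) :: mono"
  have "Poly_Mapping.lookup (nabla XA (Poly_Mapping.single ((0, {}), ?v) 1)) ((0, {J2}), (m - 1, 0, n - 1, 0)) \<noteq> 0"
    using \<open>1 \<le> m\<close> \<open>1 \<le> n\<close> by (simp add: nzsimps xdual_def ydual_def)
  hence "nabla XA (Poly_Mapping.single ((0, {}), ?v) 1) \<noteq> 0" by auto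
  moreover have "Poly_Mapping.single ((0, {}), ?v) 1 \<in> Mspace XA (int m) (int n)"
    using single_Mspace[where X=XA and v="?v"] by (simp add: Ex_def Ey_def xdual_def ydual_def)
  ultimately show ?thesis by blast
qed

lemma nzB: "1 \<le> n \<Longrightarrow> \<exists>x \<in> Mspace XB (- int m) (int n). nabla XB x \<noteq> 0"
proof -
  assume "1 \<le> n"
  let ?v = "(m, 0, n, 0) :: mono"
  have "Poly_Mapping.lookup (nabla XB (Poly_Mapping.single ((0, {}), ?v) 1)) ((0, {J2}), (m + 1, 0, n - 1, 0)) \<noteq> 0"
    using \<open>1 \<le> n\<close> by (simp add: nzsimps xdual_def ydual_def)
  hence "nabla XB (Poly_Mapping.single ((0, {}), ?v) 1) \<noteq> 0" by auto
  moreover have "Poly_Mapping.single ((0, {}), ?v) 1 \<in> Mspace XB (- int m) (int n)"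
    using single_Mspace[where X=XB and v="?v"] by (simp add: Ex_def Ey_def xdual_def ydual_def)
  ultimately show ?thesis by blast
qed

lemma nzC: "\<exists>x \<in> Mspace XC (- int m) (- int n). nabla XC x \<noteq> 0"
proof -
  let ?v = "(m, 0, n, 0) :: mono"
  have "Poly_Mapping.lookup (nabla XC (Poly_Mapping.single ((0, {}), ?v) 1)) ((0, {J2}), (m + 1, 0, n + 1, 0)) \<noteq> 0"
    by (simp add: nzsimps xdual_def ydual_def)
  hence "nabla XC (Poly_Mapping.single ((0, {}), ?v) 1) \<noteq> 0" by auto
  moreover have "Poly_Mapping.single ((0, {}), ?v) 1 \<in> Mspace XC (- int m) (- int n)"
    using single_Mspace[where X=XC and v="?v"] by (simp add: Ex_def Ey_def xdual_def ydual_def)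
  ultimately show ?thesis by blast
qed

lemma nzD: "1 \<le> m \<Longrightarrow> \<exists>x \<in> Mspace XD (int m) (- int n). nabla XD x \<noteq> 0"
proof -
  assume "1 \<le> m"
  let ?v = "(m, 0, n, 0) :: mono"
  have "Poly_Mapping.lookup (nabla XD (Poly_Mapping.single ((0, {}), ?v) 1)) ((0, {J2}), (m - 1, 0, n + 1, 0)) \<noteq> 0"
    using \<open>1 \<le> m\<close> by (simp add: nzsimps xdual_def ydual_def)
  hence "nabla XD (Poly_Mapping.single ((0, {}), ?v) 1) \<noteq> 0" by auto
  moreover have "Poly_Mapping.single ((0, {}), ?v) 1 \<in> Mspace XD (int m) (- int n)"
    using single_Mspace[where X=XD and v="?v"] by (simp add: Ex_def Ey_def xdual_def ydual_def)
  ultimately show ?thesis by blast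
qed



definition Emb :: "ub \<Rightarrow> (mono \<Rightarrow>\<^sub>0 complex) \<Rightarrow> melt" where
  "Emb u q = tensor (Poly_Mapping.single u 1) q"

definition th :: "ub \<Rightarrow> (ub \<Rightarrow>\<^sub>0 complex)" where
  "th u = Poly_Mapping.single (fst u + 1, snd u) 1"

lemma gact_lext: "gact rho z x = lext (\<lambda>c. rho c x) z"
  unfolding gact_def lext_def by simp

lemma gact_simps [simp]: "gact rho (z1 + z2) x = gact rho z1 x + gact rho z2 x"
  "gact rho (z1 - z2) x = gact rho z1 x - gact rho z2 x"
  "gact rho (cmul a z) x = cmul a (gact rho z x)"
  "gact rho (Poly_Mapping.single c a) x = cmul a (rho c x)"
  "gact rho 0 x = 0"
  by (simp_all add: gact_lext)

lemma tensor_single_lext: "tensor (Poly_Mapping.single u 1) q = lext (\<lambda>m. Poly_Mapping.single (u, m) 1) q"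
proof -
  have "tensor (Poly_Mapping.single u 1) q = tensor (Poly_Mapping.single u 1) (lext (\<lambda>m. Poly_Mapping.single m 1) q)"
    by (simp add: lext_id)
  also have "\<dots> = lext (\<lambda>m. Poly_Mapping.single (u, m) 1) q"
    by (simp add: tensor_lext2)
  finally show ?thesis .
qed

lemma Emb_lin [simp]: "Emb u (p + q) = Emb u p + Emb u q" "Emb u (p - q) = Emb u p - Emb u q"
  "Emb u (cmul c p) = cmul c (Emb u p)" "Emb u 0 = 0"
  by (simp_all add: Emb_def)

lemma tensor_single_Emb: "tensor (Poly_Mapping.single u c) q = cmul c (Emb u q)"
proof -
  have "tensor (Poly_Mapping.single u c) q = tensor (cmul c (Poly_Mapping.single u 1)) q" by simp
  thus ?thesis by (simp only: tensor_cmul1 Emb_def)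
qed

lemma lext_th_rmul_eta: "lext th (rmul_eta j (k, I)) = rmul_eta j (k + 1, I)"
  by (simp add: rmul_eta_def th_def Let_def)

lemma rmul_w_fun: "rmul_w a b = (if a = 1 \<and> b = 1 then (\<lambda>u. rmul_eta J2 u + cmul \<i> (rmul_eta J1 u))
      else if a = 2 \<and> b = 2 then (\<lambda>u. rmul_eta J2 u - cmul \<i> (rmul_eta J1 u))
      else if a = 1 \<and> b = 2 then (\<lambda>u. - rmul_eta J4 u + cmul \<i> (rmul_eta J3 u))
      else (\<lambda>u. rmul_eta J4 u + cmul \<i> (rmul_eta J3 u)))"
  by (auto simp: fun_eq_iff rmul_w_def)

lemma lext_fuminus: "lext (\<lambda>x. - f x) p = - lext f p"
  unfolding lext_def by (simp add: sum_negf)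

lemma lext_rmul_w_th: "lext (rmul_w a b) (th u) = lext th (rmul_w a b u)"
  by (cases u) (simp add: th_def rmul_w_fun lext_th_rmul_eta lext_lin lext_fuminus)

lemma lext_rmul_w_lmul: "lext (rmul_w a b) (lmul_eta i u) = lext (lmul_eta i) (rmul_w a b u)"
  by (cases u) (simp add: rmul_w_fun L2_s lext_lin lext_fuminus)


lemma card_pairs: "card (S :: (idx \<times> idx) set) = (\<Sum>a\<in>{J1, J2, J3, J4}. \<Sum>b\<in>{J1, J2, J3, J4}. if (a, b) \<in> S then 1 else 0)"
proof -
  have U: "(UNIV :: (idx \<times> idx) set) = {J1, J2, J3, J4} \<times> {J1, J2, J3, J4}"
    by (simp only: UNIV_idx[symmetric] UNIV_Times_UNIV)
  have "card S = sum (\<lambda>x. 1) (({J1, J2, J3, J4} \<times> {J1, J2, J3, J4}) \<inter> S)"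
    by (simp only: U[symmetric] Int_UNIV_left card_eq_sum)
  also have "\<dots> = sum (\<lambda>x. if x \<in> S then 1 else 0) ({J1, J2, J3, J4} \<times> {J1, J2, J3, J4})"
    by (rule sum.inter_restrict) simp
  also have "\<dots> = (\<Sum>a\<in>{J1, J2, J3, J4}. \<Sum>b\<in>{J1, J2, J3, J4}. if (a, b) \<in> S then 1 else 0)"
    by (simp add: sum.cartesian_product split_def)
  finally show ?thesis .
qed

lemma gsign_eval: "gsign I J = (if I \<inter> J \<noteq> {} then 0 else (-1) ^ (\<Sum>a\<in>{J1, J2, J3, J4}. \<Sum>b\<in>{J1, J2, J3, J4}.
   if a \<in> I \<and> b \<in> J \<and> ordi b < ordi a then 1 else 0))"
proof -
  have "card {(a, b). a \<in> I \<and> b \<in> J \<and> ordi b < ordi a} = (\<Sum>a\<in>{J1, J2, J3, J4}. \<Sum>b\<in>{J1, J2, J3, J4}.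
   if a \<in> I \<and> b \<in> J \<and> ordi b < ordi a then 1 else 0)"
    by (subst card_pairs) simp
  thus ?thesis unfolding gsign_def by presburger
qed

lemma psi_eta: "psi m I 0 {j} = (if m = 0 \<and> I = allidx - {j} then - fst (dxi j allidx) else 0)"
proof -
  have c1: "{j} \<noteq> allidx" by (cases j) (auto simp: allidx_def idx_set_eq)
  have c3: "\<not> (\<exists>i. I = {i} \<and> {j} = allidx - {i})"
    by (cases j; auto simp: allidx_def idx_set_eq; metis idx.exhaust)
  have c4: "(\<exists>i. {j} = {i} \<and> I = allidx - {i}) \<longleftrightarrow> I = allidx - {j}" by auto
  have th: "(THE i. {j} = {i}) = j" by (rule the_equality) auto
  show ?thesis unfolding psi_def using c1 c3 c4 th by auto
qed

lemma gdeg_Kb_neg: "gdeg (Kb m I) < 0 \<longleftrightarrow> m = 0 \<and> card I \<le> 1" by auto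


lemma tensor_uminus1 [simp]: "tensor (- p) v = - tensor p v"
  by (rule poly_mapping_eqI) (simp add: lookup_tensor')

lemma nabla_Emb0: "nabla X (Emb (0, {}) q) = (\<Sum>a\<in>{1, 2}. \<Sum>b\<in>{1, 2}.
    tensor (rmul_w a b (0, {})) (DY X b (DX X a q)))"
  unfolding Emb_def by (simp add: nabla_tensor)

lemma lookup_Emb: "Poly_Mapping.lookup (Emb u q) k = ind u (fst k) * Poly_Mapping.lookup q (snd k)"
  unfolding Emb_def by (simp add: lookup_tensor' lookup_single_ind)

lemma G0_set: "I = {J1, J2} \<Longrightarrow> G0 X (Kb 0 I) q = cmul (\<i>/2) (XO X 1 1 q - XO X 2 2 q + YO X 1 1 q - YO X 2 2 q)"
  "I = {J3, J4} \<Longrightarrow> G0 X (Kb 0 I) q = cmul (- \<i>/2) (XO X 1 1 q - XO X 2 2 q - YO X 1 1 q + YO X 2 2 q)"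
  "I = {J1, J3} \<Longrightarrow> G0 X (Kb 0 I) q = cmul (1/2) (XO X 2 1 q - XO X 1 2 q + YO X 2 1 q - YO X 1 2 q)"
  "I = {J2, J4} \<Longrightarrow> G0 X (Kb 0 I) q = cmul (1/2) (XO X 2 1 q - XO X 1 2 q - YO X 2 1 q + YO X 1 2 q)"
  "I = {J2, J3} \<Longrightarrow> G0 X (Kb 0 I) q = cmul (- \<i>/2) (XO X 1 2 q + XO X 2 1 q + YO X 1 2 q + YO X 2 1 q)"
  "I = {J1, J4} \<Longrightarrow> G0 X (Kb 0 I) q = cmul (- \<i>/2) (YO X 1 2 q + YO X 2 1 q - XO X 1 2 q - XO X 2 1 q)"
  "I = {} \<Longrightarrow> G0 X (Kb 1 I) q = cmul (-1/2) (XO X 1 1 q + XO X 2 2 q + YO X 1 1 q + YO X 2 2 q) + cmul (of_int (iX X)) q"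
  using g_12 g_34 g_13 g_24 g_23 g_14 g_t[of X q] by simp_all

lemma G0_t': "G0 X (Kb (Suc 0) {}) q = cmul (-1/2) (XO X 1 1 q + XO X 2 2 q + YO X 1 1 q + YO X 2 2 q) + cmul (of_int (iX X)) q"
  using g_t[of X q] by simp

lemma n2': "\<not> xdual X \<Longrightarrow> i \<in> {1,2::nat} \<Longrightarrow> XO X i 2 (DX X (Suc 0) q) = XO X i 1 (DX X 2 q)"
  using n2 by simp
lemma d2': "xdual X \<Longrightarrow> i \<in> {1,2::nat} \<Longrightarrow> DX X (Suc 0) (XO X i 2 q) = DX X 2 (XO X i 1 q)"
  using d2 by simp
lemma m2': "\<not> ydual X \<Longrightarrow> i \<in> {1,2::nat} \<Longrightarrow> YO X i 2 (DY X (Suc 0) q) = YO X i 1 (DY X 2 q)"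
  using m2 by simp
lemma e2': "ydual X \<Longrightarrow> i \<in> {1,2::nat} \<Longrightarrow> DY X (Suc 0) (YO X i 2 q) = DY X 2 (YO X i 1 q)"
  using e2 by simp

lemmas S_gbr = gbr.simps kbr_def psi_eta gsign_eval dxi_def allidx_def card_idx insert_Diff_if
lemmas S_V = n1 d1 m1 e1 n2 d2 m2 e2 n2' d2' m2' e2' r1 r2 r3 xdual_def ydual_def
lemmas S_rw = nabla_Emb0 sum12 rmul_w_def rmul_eta_def Let_def tensor_single_Emb

lemma finite_idx_set: "finite (I :: idx set)"
proof -
  have "finite (UNIV :: idx set)" by (simp add: UNIV_idx)
  thus ?thesis by (rule finite_subset[rotated]) simp
qed


lemma card_allidx_minus: "card (allidx - {j}) = 3"
  by (cases j) (simp_all add: allidx_def card_idx)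

lemma keys_gbr_eta:
  assumes c: "c \<in> Poly_Mapping.keys (gbr (Kb m I) (Kb 0 {j}))" and d: "2 \<le> gdeg (Kb m I)"
  shows "0 < gdeg c"
proof -
  have fI: "finite I" by (rule finite_idx_set)
  have psi0: "psi m I 0 {j} = 0"
  proof -
    have nc: "\<not> (m = 0 \<and> I = allidx - {j})"
    proof
      assume "m = 0 \<and> I = allidx - {j}"
      hence "gdeg (Kb m I) = 1" using card_allidx_minus[of j] by simp
      thus False using d by simp
    qed
    show ?thesis by (simp only: psi_eta if_not_P[OF nc])
  qed
  have ck: "c \<in> Poly_Mapping.keys (kbr m I 0 {j})"
    using c keys_add[of "kbr m I 0 {j}" "Poly_Mapping.single Cb (psi m I 0 {j})"] psi0 by auto
  let ?A = "Poly_Mapping.single (Kb (m + 0 - 1) (I \<union> {j}))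
       (((2 - of_nat (card I)) * of_nat 0 - of_nat m * (2 - of_nat (card {j}))) * gsign I {j})"
  let ?B = "(\<Sum>i\<in>allidx. Poly_Mapping.single (Kb (m + 0) (snd (dxi i I) \<union> snd (dxi i {j})))
            (fst (dxi i I) * fst (dxi i {j}) * gsign (snd (dxi i I)) (snd (dxi i {j}))))"
  have "kbr m I 0 {j} = ?A + cmul ((-1) ^ card I) ?B" unfolding kbr_def by simp
  hence "c \<in> Poly_Mapping.keys ?A \<or> c \<in> Poly_Mapping.keys ?B"
    using ck keys_add[of ?A "cmul ((-1) ^ card I) ?B"] by (auto dest: keys_cmul_sub)
  thus ?thesis
  proof
    assume cA: "c \<in> Poly_Mapping.keys ?A"
    hence nz: "of_nat m * gsign I {j} \<noteq> (0::complex)" and ce: "c = Kb (m - 1) (I \<union> {j})"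
      by (auto split: if_splits)
    hence "m \<noteq> 0" "j \<notin> I" by (auto simp: gsign_def split: if_splits)
    hence "card (I \<union> {j}) = card I + 1" using fI by simp
    thus ?thesis using ce d \<open>m \<noteq> 0\<close> by simp
  next
    assume "c \<in> Poly_Mapping.keys ?B"
    then obtain i where "c \<in> Poly_Mapping.keys (Poly_Mapping.single (Kb (m + 0) (snd (dxi i I) \<union> snd (dxi i {j})))
            (fst (dxi i I) * fst (dxi i {j}) * gsign (snd (dxi i I)) (snd (dxi i {j}))))"
      by (blast dest: keys_sum_sub)
    hence nz: "fst (dxi i I) * fst (dxi i {j}) \<noteq> 0" and ce: "c = Kb m (snd (dxi i I) \<union> snd (dxi i {j}))"
      by (auto split: if_splits)
    hence ij: "i \<in> I" "i = j" by (auto simp: dxi_def split: if_splits)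
    hence "c = Kb m (I - {j})" using ce by (simp add: dxi_def)
    moreover have "card (I - {j}) = card I - 1" using ij fI by simp
    moreover have "card I \<ge> 1" using ij fI by (metis card_0_eq empty_iff less_one not_le)
    ultimately show ?thesis using d by simp
  qed
qed

lemma gact_zero: "(\<And>c. c \<in> Poly_Mapping.keys z \<Longrightarrow> rho c x = 0) \<Longrightarrow> gact rho z x = 0"
  unfolding gact_def by (simp add: sum.neutral)

context
  fixes X :: VX and rho :: "gb \<Rightarrow> melt \<Rightarrow> melt"
  assumes ir: "induced_rep X rho"
begin

lemmas irp = ir[unfolded induced_rep_def]
lemmas ir1 = conjunct1[OF irp]
lemmas ir2 = conjunct1[OF conjunct2[OF irp]]
lemmas ir3 = conjunct1[OF conjunct2[OF conjunct2[OF irp]]]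
lemmas ir4 = conjunct1[OF conjunct2[OF conjunct2[OF conjunct2[OF irp]]]]
lemmas ir5 = conjunct1[OF conjunct2[OF conjunct2[OF conjunct2[OF conjunct2[OF irp]]]]]
lemmas ir6 = conjunct1[OF conjunct2[OF conjunct2[OF conjunct2[OF conjunct2[OF conjunct2[OF irp]]]]]]
lemmas ir7 = conjunct2[OF conjunct2[OF conjunct2[OF conjunct2[OF conjunct2[OF conjunct2[OF irp]]]]]]

lemma rho_add [simp]: "rho b (x + y) = rho b x + rho b y"
  using ir1 by blast
lemma rho_cmul [simp]: "rho b (cmul c x) = cmul c (rho b x)"
  using ir2 by blast
lemma rho_zero [simp]: "rho b 0 = 0"
  using rho_cmul[of b 0 0] by simp
lemma rho_uminus [simp]: "rho b (- x) = - rho b x"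
  by (metis add_eq_0_iff2 rho_add rho_zero)
lemma rho_diff [simp]: "rho b (x - y) = rho b x - rho b y"
  by (metis add_diff_cancel diff_add_cancel rho_add)
lemma rho_sum: "rho b (sum f A) = (\<Sum>a\<in>A. rho b (f a))"
  by (induction A rule: infinite_finite_induct) auto
lemma rho_lext: "rho b (lext f p) = lext (\<lambda>a. rho b (f a)) p"
  unfolding lext_def by (simp add: rho_sum)
lemma rho_br: "rho b1 (rho b2 x) = cmul ((-1) ^ (par b1 * par b2)) (rho b2 (rho b1 x)) + gact rho (gbr b1 b2) x"
proof -
  have "rho b1 (rho b2 x) - cmul ((-1) ^ (par b1 * par b2)) (rho b2 (rho b1 x)) = gact rho (gbr b1 b2) x"
    using ir3 by blast
  thus ?thesis by (simp add: diff_eq_eq)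
qed
lemma rho_theta: "rho (Kb 0 {}) (Poly_Mapping.single (u, v) 1) = Poly_Mapping.single ((fst u + 1, snd u), v) 1"
  using ir4 by blast
lemma rho_eta: "rho (Kb 0 {i}) (Poly_Mapping.single (u, v) 1) = tensor (lmul_eta i u) (Poly_Mapping.single v 1)"
  using ir5 by blast
lemma rho_g0: "gdeg b = 0 \<Longrightarrow> rho b (Poly_Mapping.single ((0, {}), v) 1)
              = tensor (Poly_Mapping.single (0, {}) 1) (g0act X b v)"
  using ir6 by blast
lemma rho_pos: "gdeg b > 0 \<Longrightarrow> rho b (Poly_Mapping.single ((0, {}), v) 1) = 0"
  using ir7 by blast

lemma rho_decomp: "rho b x = lext (\<lambda>k. rho b (Poly_Mapping.single k 1)) x"
  by (subst lext_id[symmetric, of x]) (simp only: rho_lext)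

lemma rho_Emb: "rho b (Emb u q) = lext (\<lambda>m. rho b (Poly_Mapping.single (u, m) 1)) q"
  unfolding Emb_def tensor_single_lext by (simp only: rho_lext)

lemma F1: "gdeg b = 0 \<Longrightarrow> rho b (Emb (0, {}) q) = Emb (0, {}) (G0 X b q)"
proof -
  assume b: "gdeg b = 0"
  have "rho b (Emb (0, {}) q) = lext (\<lambda>m. tensor (Poly_Mapping.single (0, {}) 1) (g0act X b m)) q"
    by (simp only: rho_Emb rho_g0[OF b])
  also have "\<dots> = Emb (0, {}) (G0 X b q)"
    by (simp only: tensor_lext2[symmetric] Emb_def G0_def)
  finally show ?thesis .
qed

lemma F2: "gdeg b > 0 \<Longrightarrow> rho b (Emb (0, {}) q) = 0"
  by (simp add: rho_Emb rho_pos lext_fzero)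

lemma lmul_eta_0: "lmul_eta i (0, {}) = Poly_Mapping.single (0, {i}) 1"
  by (simp add: lmul_eta_def)

lemma F3: "rho (Kb 0 {j}) (Emb (0, {}) q) = Emb (0, {j}) q"
proof -
  have "rho (Kb 0 {j}) (Emb (0, {}) q) = lext (\<lambda>m. tensor (Poly_Mapping.single (0, {j}) 1) (Poly_Mapping.single m 1)) q"
    by (simp only: rho_Emb rho_eta lmul_eta_0)
  also have "\<dots> = tensor (Poly_Mapping.single (0, {j}) 1) (lext (\<lambda>m. Poly_Mapping.single m 1) q)"
    by (simp only: tensor_lext2)
  also have "\<dots> = Emb (0, {j}) q"
    by (simp only: lext_id Emb_def)
  finally show ?thesis .
qed

lemma rho_tensor_gen:
  assumes "\<And>u v. rho c (Poly_Mapping.single (u, v) 1) = tensor (F u) (Poly_Mapping.single v 1)"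
  shows "rho c (tensor p q) = tensor (lext F p) q"
proof -
  have "rho c (tensor p q) = lext (\<lambda>a. lext (\<lambda>b. tensor (F a) (Poly_Mapping.single b 1)) q) p"
    by (simp only: tensor_decomp[of p q] rho_lext assms)
  also have "\<dots> = lext (\<lambda>a. tensor (F a) q) p"
    by (simp only: tensor_lext2[symmetric] lext_id)
  also have "\<dots> = tensor (lext F p) q"
    by (simp only: tensor_lext1)
  finally show ?thesis .
qed

lemma commute_gen:
  assumes "\<And>u v. rho c (Poly_Mapping.single (u, v) 1) = tensor (F u) (Poly_Mapping.single v 1)"
    and "\<And>a b u. lext (rmul_w a b) (F u) = lext F (rmul_w a b u)"
  shows "nabla X (rho c z) = rho c (nabla X z)"
proof -
  have rt: "\<And>p q. rho c (tensor p q) = tensor (lext F p) q"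
    by (rule rho_tensor_gen) (rule assms(1))
  have "\<And>k. nabla X (rho c (Poly_Mapping.single k 1)) = rho c (NF X k)"
  proof -
    fix k :: "ub \<times> mono"
    obtain u v where k: "k = (u, v)" by (cases k)
    show "nabla X (rho c (Poly_Mapping.single k 1)) = rho c (NF X k)"
      unfolding k NF_tensor
      by (simp add: assms(1) nabla_tensor rho_sum rt assms(2) DX_def DY_def)
  qed
  hence "nabla X (rho c z) = lext (\<lambda>k. rho c (NF X k)) z"
    by (subst rho_decomp) (simp add: nabla_NF lext_comp)
  also have "\<dots> = rho c (nabla X z)"
    by (simp add: nabla_NF rho_lext)
  finally show ?thesis .
qed

lemma Lc_eta: "nabla X (rho (Kb 0 {i}) z) = rho (Kb 0 {i}) (nabla X z)"
  by (rule commute_gen[where F = "lmul_eta i"]) (simp_all add: rho_eta lext_rmul_w_lmul)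

lemma Lc_theta: "nabla X (rho (Kb 0 {}) z) = rho (Kb 0 {}) (nabla X z)"
  by (rule commute_gen[where F = "th"]) (simp add: rho_theta th_def, rule lext_rmul_w_th)

definition PP :: "melt \<Rightarrow> bool" where
  "PP x \<longleftrightarrow> (\<forall>b. nabla X (rho b x) = rho b (nabla X x))"

lemma PP_add: "PP x \<Longrightarrow> PP y \<Longrightarrow> PP (x + y)"
  unfolding PP_def by simp
lemma PP_cmul: "PP x \<Longrightarrow> PP (cmul c x)"
  unfolding PP_def by simp
lemma PP_zero: "PP 0"
  unfolding PP_def by simp
lemma PP_sum: "(\<And>a. a \<in> A \<Longrightarrow> PP (f a)) \<Longrightarrow> PP (sum f A)"
  by (induction A rule: infinite_finite_induct) (auto intro: PP_add PP_zero)

lemma nabla_gact: "PP y \<Longrightarrow> nabla X (gact rho z y) = gact rho z (nabla X y)"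
  unfolding gact_lext PP_def by (simp add: nabla_NF lext_comp)

lemma PP_step:
  assumes y: "PP y" and Lc: "\<And>z. nabla X (rho c z) = rho c (nabla X z)"
  shows "PP (rho c y)"
  unfolding PP_def
proof
  fix b
  have "nabla X (rho b (rho c y)) =
      nabla X (cmul ((-1) ^ (par b * par c)) (rho c (rho b y)) + gact rho (gbr b c) y)"
    by (simp only: rho_br[of b c])
  also have "\<dots> = cmul ((-1) ^ (par b * par c)) (rho c (rho b (nabla X y))) + gact rho (gbr b c) (nabla X y)"
    using y by (simp add: Lc nabla_gact) (simp add: PP_def)
  also have "\<dots> = rho b (rho c (nabla X y))"
    by (simp only: rho_br[of b c])
  also have "\<dots> = rho b (nabla X (rho c y))"
    by (simp add: Lc)
  finally show "nabla X (rho b (rho c y)) = rho b (nabla X (rho c y))" .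
qed


lemma rhoEi: "rho b (Emb (0, {j}) q) = cmul ((-1) ^ (par b)) (rho (Kb 0 {j}) (rho b (Emb (0, {}) q)))
    + gact rho (gbr b (Kb 0 {j})) (Emb (0, {}) q)"
proof -
  have "rho b (Emb (0, {j}) q) = rho b (rho (Kb 0 {j}) (Emb (0, {}) q))" by (simp only: F3)
  also have "\<dots> = cmul ((-1) ^ (par b * par (Kb 0 {j}))) (rho (Kb 0 {j}) (rho b (Emb (0, {}) q)))
    + gact rho (gbr b (Kb 0 {j})) (Emb (0, {}) q)" by (rule rho_br)
  finally show ?thesis by simp
qed

lemma bc0: "nabla X (rho (Cb) (Emb (0, {}) q)) = rho (Cb) (nabla X (Emb (0, {}) q))"
  apply (cases X)
  apply ((simp_all add: F1 F2 S_rw)?)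
  apply ((simp_all add: rho_sum rhoEi F1 F2 F3)?)
  apply ((simp_all add: S_gbr insert_commute F1 F2 F3)?)
  apply ((simp_all add: G0_set G0_t' g_C idx_set_eq)?)
  apply ((simp_all add: S_V)?)
  apply ((rule poly_mapping_eqI, simp add: lookup_add lookup_minus lookup_Emb iX_def jX_def algebra_simps)+)?
  done

lemma bc1: "nabla X (rho (Kb 1 {}) (Emb (0, {}) q)) = rho (Kb 1 {}) (nabla X (Emb (0, {}) q))"
  apply (cases X)
  apply ((simp_all add: F1 F2 S_rw)?)
  apply ((simp_all add: rho_sum rhoEi F1 F2 F3)?)
  apply ((simp_all add: S_gbr insert_commute F1 F2 F3)?)
  apply ((simp_all add: G0_set G0_t' g_C idx_set_eq)?)
  apply ((simp_all add: S_V)?)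
  apply ((rule poly_mapping_eqI, simp add: lookup_add lookup_minus lookup_Emb iX_def jX_def algebra_simps)+)?
  done

lemma bc2: "nabla X (rho (Kb 0 {J1, J2}) (Emb (0, {}) q)) = rho (Kb 0 {J1, J2}) (nabla X (Emb (0, {}) q))"
  apply (cases X)
  apply ((simp_all add: F1 F2 S_rw)?)
  apply ((simp_all add: rho_sum rhoEi F1 F2 F3)?)
  apply ((simp_all add: S_gbr insert_commute F1 F2 F3)?)
  apply ((simp_all add: G0_set G0_t' g_C idx_set_eq)?)
  apply ((simp_all add: S_V)?)
  apply ((rule poly_mapping_eqI, simp add: lookup_add lookup_minus lookup_Emb iX_def jX_def algebra_simps)+)?
  done

lemma bc3: "nabla X (rho (Kb 0 {J1, J3}) (Emb (0, {}) q)) = rho (Kb 0 {J1, J3}) (nabla X (Emb (0, {}) q))"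
  apply (cases X)
  apply ((simp_all add: F1 F2 S_rw)?)
  apply ((simp_all add: rho_sum rhoEi F1 F2 F3)?)
  apply ((simp_all add: S_gbr insert_commute F1 F2 F3)?)
  apply ((simp_all add: G0_set G0_t' g_C idx_set_eq)?)
  apply ((simp_all add: S_V)?)
  apply ((rule poly_mapping_eqI, simp add: lookup_add lookup_minus lookup_Emb iX_def jX_def algebra_simps)+)?
  done

lemma bc4: "nabla X (rho (Kb 0 {J1, J4}) (Emb (0, {}) q)) = rho (Kb 0 {J1, J4}) (nabla X (Emb (0, {}) q))"
  apply (cases X)
  apply ((simp_all add: F1 F2 S_rw)?)
  apply ((simp_all add: rho_sum rhoEi F1 F2 F3)?)
  apply ((simp_all add: S_gbr insert_commute F1 F2 F3)?)
  apply ((simp_all add: G0_set G0_t' g_C idx_set_eq)?)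
  apply ((simp_all add: S_V)?)
  apply ((rule poly_mapping_eqI, simp add: lookup_add lookup_minus lookup_Emb iX_def jX_def algebra_simps)+)?
  done

lemma bc5: "nabla X (rho (Kb 0 {J2, J3}) (Emb (0, {}) q)) = rho (Kb 0 {J2, J3}) (nabla X (Emb (0, {}) q))"
  apply (cases X)
  apply ((simp_all add: F1 F2 S_rw)?)
  apply ((simp_all add: rho_sum rhoEi F1 F2 F3)?)
  apply ((simp_all add: S_gbr insert_commute F1 F2 F3)?)
  apply ((simp_all add: G0_set G0_t' g_C idx_set_eq)?)
  apply ((simp_all add: S_V)?)
  apply ((rule poly_mapping_eqI, simp add: lookup_add lookup_minus lookup_Emb iX_def jX_def algebra_simps)+)?
  done

lemma bc6: "nabla X (rho (Kb 0 {J2, J4}) (Emb (0, {}) q)) = rho (Kb 0 {J2, J4}) (nabla X (Emb (0, {}) q))"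
  apply (cases X)
  apply ((simp_all add: F1 F2 S_rw)?)
  apply ((simp_all add: rho_sum rhoEi F1 F2 F3)?)
  apply ((simp_all add: S_gbr insert_commute F1 F2 F3)?)
  apply ((simp_all add: G0_set G0_t' g_C idx_set_eq)?)
  apply ((simp_all add: S_V)?)
  apply ((rule poly_mapping_eqI, simp add: lookup_add lookup_minus lookup_Emb iX_def jX_def algebra_simps)+)?
  done

lemma bc7: "nabla X (rho (Kb 0 {J3, J4}) (Emb (0, {}) q)) = rho (Kb 0 {J3, J4}) (nabla X (Emb (0, {}) q))"
  apply (cases X)
  apply ((simp_all add: F1 F2 S_rw)?)
  apply ((simp_all add: rho_sum rhoEi F1 F2 F3)?)
  apply ((simp_all add: S_gbr insert_commute F1 F2 F3)?)
  apply ((simp_all add: G0_set G0_t' g_C idx_set_eq)?)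
  apply ((simp_all add: S_V)?)
  apply ((rule poly_mapping_eqI, simp add: lookup_add lookup_minus lookup_Emb iX_def jX_def algebra_simps)+)?
  done

lemma bc8: "nabla X (rho (Kb 0 {J2, J3, J4}) (Emb (0, {}) q)) = rho (Kb 0 {J2, J3, J4}) (nabla X (Emb (0, {}) q))"
  apply (cases X)
  apply ((simp_all add: F1 F2 S_rw)?)
  apply ((simp_all add: rho_sum rhoEi F1 F2 F3)?)
  apply ((simp_all add: S_gbr insert_commute F1 F2 F3)?)
  apply ((simp_all add: G0_set G0_t' g_C idx_set_eq)?)
  apply ((simp_all add: S_V)?)
  apply ((rule poly_mapping_eqI, simp add: lookup_add lookup_minus lookup_Emb iX_def jX_def algebra_simps)+)?
  done

lemma bc9: "nabla X (rho (Kb 0 {J1, J3, J4}) (Emb (0, {}) q)) = rho (Kb 0 {J1, J3, J4}) (nabla X (Emb (0, {}) q))"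
  apply (cases X)
  apply ((simp_all add: F1 F2 S_rw)?)
  apply ((simp_all add: rho_sum rhoEi F1 F2 F3)?)
  apply ((simp_all add: S_gbr insert_commute F1 F2 F3)?)
  apply ((simp_all add: G0_set G0_t' g_C idx_set_eq)?)
  apply ((simp_all add: S_V)?)
  apply ((rule poly_mapping_eqI, simp add: lookup_add lookup_minus lookup_Emb iX_def jX_def algebra_simps)+)?
  done

lemma bc10: "nabla X (rho (Kb 0 {J1, J2, J4}) (Emb (0, {}) q)) = rho (Kb 0 {J1, J2, J4}) (nabla X (Emb (0, {}) q))"
  apply (cases X)
  apply ((simp_all add: F1 F2 S_rw)?)
  apply ((simp_all add: rho_sum rhoEi F1 F2 F3)?)
  apply ((simp_all add: S_gbr insert_commute F1 F2 F3)?)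
  apply ((simp_all add: G0_set G0_t' g_C idx_set_eq)?)
  apply ((simp_all add: S_V)?)
  apply ((rule poly_mapping_eqI, simp add: lookup_add lookup_minus lookup_Emb iX_def jX_def algebra_simps)+)?
  done

lemma bc11: "nabla X (rho (Kb 0 {J1, J2, J3}) (Emb (0, {}) q)) = rho (Kb 0 {J1, J2, J3}) (nabla X (Emb (0, {}) q))"
  apply (cases X)
  apply ((simp_all add: F1 F2 S_rw)?)
  apply ((simp_all add: rho_sum rhoEi F1 F2 F3)?)
  apply ((simp_all add: S_gbr insert_commute F1 F2 F3)?)
  apply ((simp_all add: G0_set G0_t' g_C idx_set_eq)?)
  apply ((simp_all add: S_V)?)
  apply ((rule poly_mapping_eqI, simp add: lookup_add lookup_minus lookup_Emb iX_def jX_def algebra_simps)+)?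
  done

lemma bc12: "nabla X (rho (Kb 1 {J1}) (Emb (0, {}) q)) = rho (Kb 1 {J1}) (nabla X (Emb (0, {}) q))"
  apply (cases X)
  apply ((simp_all add: F1 F2 S_rw)?)
  apply ((simp_all add: rho_sum rhoEi F1 F2 F3)?)
  apply ((simp_all add: S_gbr insert_commute F1 F2 F3)?)
  apply ((simp_all add: G0_set G0_t' g_C idx_set_eq)?)
  apply ((simp_all add: S_V)?)
  apply ((rule poly_mapping_eqI, simp add: lookup_add lookup_minus lookup_Emb iX_def jX_def algebra_simps)+)?
  done

lemma bc13: "nabla X (rho (Kb 1 {J2}) (Emb (0, {}) q)) = rho (Kb 1 {J2}) (nabla X (Emb (0, {}) q))"
  apply (cases X)
  apply ((simp_all add: F1 F2 S_rw)?)
  apply ((simp_all add: rho_sum rhoEi F1 F2 F3)?)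
  apply ((simp_all add: S_gbr insert_commute F1 F2 F3)?)
  apply ((simp_all add: G0_set G0_t' g_C idx_set_eq)?)
  apply ((simp_all add: S_V)?)
  apply ((rule poly_mapping_eqI, simp add: lookup_add lookup_minus lookup_Emb iX_def jX_def algebra_simps)+)?
  done

lemma bc14: "nabla X (rho (Kb 1 {J3}) (Emb (0, {}) q)) = rho (Kb 1 {J3}) (nabla X (Emb (0, {}) q))"
  apply (cases X)
  apply ((simp_all add: F1 F2 S_rw)?)
  apply ((simp_all add: rho_sum rhoEi F1 F2 F3)?)
  apply ((simp_all add: S_gbr insert_commute F1 F2 F3)?)
  apply ((simp_all add: G0_set G0_t' g_C idx_set_eq)?)
  apply ((simp_all add: S_V)?)
  apply ((rule poly_mapping_eqI, simp add: lookup_add lookup_minus lookup_Emb iX_def jX_def algebra_simps)+)?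
  done

lemma bc15: "nabla X (rho (Kb 1 {J4}) (Emb (0, {}) q)) = rho (Kb 1 {J4}) (nabla X (Emb (0, {}) q))"
  apply (cases X)
  apply ((simp_all add: F1 F2 S_rw)?)
  apply ((simp_all add: rho_sum rhoEi F1 F2 F3)?)
  apply ((simp_all add: S_gbr insert_commute F1 F2 F3)?)
  apply ((simp_all add: G0_set G0_t' g_C idx_set_eq)?)
  apply ((simp_all add: S_V)?)
  apply ((rule poly_mapping_eqI, simp add: lookup_add lookup_minus lookup_Emb iX_def jX_def algebra_simps)+)?
  done

lemma gact_high: "2 \<le> gdeg (Kb m I) \<Longrightarrow> gact rho (gbr (Kb m I) (Kb 0 {j})) (Emb (0, {}) q) = 0"
  by (rule gact_zero) (simp add: F2 keys_gbr_eta del: gbr.simps)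

lemma high: "2 \<le> gdeg (Kb m I) \<Longrightarrow> nabla X (rho (Kb m I) (Emb (0, {}) q)) = rho (Kb m I) (nabla X (Emb (0, {}) q))"
  by (simp add: F2 S_rw rho_sum rhoEi gact_high del: gbr.simps)

lemma base: "PP (Poly_Mapping.single ((0, {}), v) 1)"
  unfolding PP_def
proof
  fix b
  have x0: "Poly_Mapping.single ((0, {}), v) 1 = Emb (0, {}) (Poly_Mapping.single v 1)"
    by (simp add: Emb_def)
  have "nabla X (rho b (Emb (0, {}) (Poly_Mapping.single v 1))) = rho b (nabla X (Emb (0, {}) (Poly_Mapping.single v 1)))"
  proof (cases b)
    case Cb
    then show ?thesis by (simp only: bc0)
  next
    case (Kb m I)
    have "m = 0 \<or> m = 1 \<or> 2 \<le> m" by auto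
    then show ?thesis
    proof (elim disjE)
      assume "2 \<le> m"
      thus ?thesis unfolding Kb by (intro high) simp
    next
      assume m: "m = 0"
      show ?thesis
      proof -
        have "I = {} \<or> I = {J1} \<or> I = {J2} \<or> I = {J3} \<or> I = {J4} \<or> I = {J1, J2} \<or> I = {J1, J3} \<or> I = {J1, J4}
          \<or> I = {J2, J3} \<or> I = {J2, J4} \<or> I = {J3, J4} \<or> I = {J1, J2, J3} \<or> I = {J1, J2, J4} \<or> I = {J1, J3, J4}
          \<or> I = {J2, J3, J4} \<or> I = {J1, J2, J3, J4}"
          using idx_subsets[of I] by (simp only: insert_iff empty_iff simp_thms)
        hence "nabla X (rho (Kb 0 I) (Emb (0, {}) (Poly_Mapping.single v 1))) = rho (Kb 0 I) (nabla X (Emb (0, {}) (Poly_Mapping.single v 1)))"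
          apply (elim disjE)
          apply (simp_all only:)
          apply (rule Lc_theta)
          apply (rule Lc_eta)+
          apply (rule bc2, rule bc3, rule bc4, rule bc5, rule bc6, rule bc7, rule bc11, rule bc10, rule bc9, rule bc8)
          apply (rule high, simp add: card_idx)
          done
        thus ?thesis unfolding Kb m .
      qed
    next
      assume m: "m = 1"
      show ?thesis
      proof -
        have "I = {} \<or> I = {J1} \<or> I = {J2} \<or> I = {J3} \<or> I = {J4} \<or> I = {J1, J2} \<or> I = {J1, J3} \<or> I = {J1, J4}
          \<or> I = {J2, J3} \<or> I = {J2, J4} \<or> I = {J3, J4} \<or> I = {J1, J2, J3} \<or> I = {J1, J2, J4} \<or> I = {J1, J3, J4}
          \<or> I = {J2, J3, J4} \<or> I = {J1, J2, J3, J4}"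
          using idx_subsets[of I] by (simp only: insert_iff empty_iff simp_thms)
        hence "nabla X (rho (Kb 1 I) (Emb (0, {}) (Poly_Mapping.single v 1))) = rho (Kb 1 I) (nabla X (Emb (0, {}) (Poly_Mapping.single v 1)))"
          apply (elim disjE)
          apply (simp_all only:)
          apply (rule bc1, rule bc12, rule bc13, rule bc14, rule bc15)
          apply (rule high, simp add: card_idx)+
          done
        thus ?thesis unfolding Kb m .
      qed
    qed
  qed
  thus "nabla X (rho b (Poly_Mapping.single ((0, {}), v) 1)) = rho b (nabla X (Poly_Mapping.single ((0, {}), v) 1))"
    by (simp only: x0)
qed

lemma lmul_eta_insert: "i \<notin> F \<Longrightarrow> \<exists>s. s \<noteq> 0 \<and> lmul_eta i (0, F) = Poly_Mapping.single (0, insert i F) s"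
  by (rule exI[where x="(-1) ^ card {j \<in> F. ordi j < ordi i}"]) (simp add: lmul_eta_def)

lemma PP_k0: "finite I \<Longrightarrow> PP (Poly_Mapping.single ((0, I), v) 1)"
proof (induction I arbitrary: v rule: finite_induct)
  case empty
  then show ?case by (rule base)
next
  case (insert i F)
  obtain s where s: "s \<noteq> 0" "lmul_eta i (0, F) = Poly_Mapping.single (0, insert i F) s"
    using lmul_eta_insert[OF insert(2)] by blast
  have "rho (Kb 0 {i}) (Poly_Mapping.single ((0, F), v) 1) = Poly_Mapping.single ((0, insert i F), v) s"
    by (simp add: rho_eta s)
  hence "Poly_Mapping.single ((0, insert i F), v) 1 = cmul (1 / s) (rho (Kb 0 {i}) (Poly_Mapping.single ((0, F), v) 1))"
    using s by simp
  moreover have "PP (rho (Kb 0 {i}) (Poly_Mapping.single ((0, F), v) 1))"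
    by (rule PP_step[OF insert(3)]) (rule Lc_eta)
  ultimately show ?case by (simp add: PP_cmul)
qed

lemma PP_single: "PP (Poly_Mapping.single ((k, I), v) 1)"
proof (induction k)
  case 0
  then show ?case by (rule PP_k0[OF finite_idx_set])
next
  case (Suc k)
  have "rho (Kb 0 {}) (Poly_Mapping.single ((k, I), v) 1) = Poly_Mapping.single ((Suc k, I), v) 1"
    by (simp add: rho_theta)
  moreover have "PP (rho (Kb 0 {}) (Poly_Mapping.single ((k, I), v) 1))"
    by (rule PP_step[OF Suc]) (rule Lc_theta)
  ultimately show ?case by simp
qed

lemma PP_all: "PP x"
proof -
  have "x = (\<Sum>k\<in>Poly_Mapping.keys x. cmul (Poly_Mapping.lookup x k) (Poly_Mapping.single k 1))"
    by (rule poly_decomp)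
  moreover have "PP (\<Sum>k\<in>Poly_Mapping.keys x. cmul (Poly_Mapping.lookup x k) (Poly_Mapping.single k 1))"
  proof (rule PP_sum)
    fix k :: "ub \<times> mono"
    obtain a I v where k: "k = ((a, I), v)" by (metis prod.exhaust)
    show "PP (cmul (Poly_Mapping.lookup x k) (Poly_Mapping.single k 1))"
      unfolding k by (rule PP_cmul[OF PP_single])
  qed
  ultimately show ?thesis by simp
qed

end


theorem proposition4p5:
  fixes X :: VX and rho :: "gb \<Rightarrow> melt \<Rightarrow> melt"
  shows "(induced_rep X rho \<longrightarrow> (\<forall>b x. nabla X (rho b x) = rho b (nabla X x)))
    \<and> (\<forall>x y. nabla X (x + y) = nabla X x + nabla X y)
    \<and> (\<forall>c x. nabla X (cmul c x) = cmul c (nabla X x))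
    \<and> (\<forall>x. nabla X (nabla X x) = 0)
    \<and> (\<forall>m n x. x \<in> Mspace X m n \<longrightarrow> nabla X x \<in> Mspace X (m - 1) (n - 1))
    \<and> (\<forall>m n :: nat. 1 \<le> m \<longrightarrow> 1 \<le> n \<longrightarrow>
          (\<exists>x \<in> Mspace XA (int m) (int n). nabla XA x \<noteq> 0))
    \<and> (\<forall>m n :: nat. 1 \<le> n \<longrightarrow>
          (\<exists>x \<in> Mspace XB (- int m) (int n). nabla XB x \<noteq> 0))
    \<and> (\<forall>m n :: nat. (\<exists>x \<in> Mspace XC (- int m) (- int n). nabla XC x \<noteq> 0))
    \<and> (\<forall>m n :: nat. 1 \<le> m \<longrightarrow>
          (\<exists>x \<in> Mspace XD (int m) (- int n). nabla XD x \<noteq> 0))"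
proof -
  have h1: "induced_rep X rho \<longrightarrow> (\<forall>b x. nabla X (rho b x) = rho b (nabla X x))"
  proof (intro impI allI)
    fix b x assume ir: "induced_rep X rho"
    show "nabla X (rho b x) = rho b (nabla X x)"
      using PP_all[OF ir, of x] unfolding PP_def[OF ir] by blast
  qed
  show ?thesis
    using h1 nabla_nabla nabla_Mspace nzA nzB nzC nzD by simp
qed

end
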